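(* Let $\mathcal{F}$ be the class of planar graphs of maximum degree at most $4$, and let $G \in \mathcal{F}$ be a graph with $\chi_2(G) > 12$ that minimizes the pair $(|V(G)|, |E(G)|)$ (lexicographically) among all graphs of $\mathcal{F}$ with $\chi_2 > 12$, with a fixed planar embedding. Then $G$ does not contain a $3$-vertex incident to a $3$-face.
   Context: All graphs are finite, without loops or parallel edges. A distance-$2$ coloring of a graph is an assignment of colors to its vertices such that any two distinct vertices at distance at most $2$ receive different colors; $\chi_2(G)$ is the minimum number of colors in a distance-$2$ coloring of $G$. A $d$-vertex is a vertex of degree $d$. The degree of a face is the number of edges incident to it, counted with multiplicity; a $d$-face is a face of degree $d$. A vertex is incident to a face if it lies on its boundary. *)

theory Defs
  imports Main
begin

definition simple_graph :: "'a set \<Rightarrow> 'a set set \<Rightarrow> bool" where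
  "simple_graph V E \<longleftrightarrow> finite V \<and> (\<forall>e\<in>E. e \<subseteq> V \<and> card e = 2)"

definition adj :: "'a set set \<Rightarrow> 'a \<Rightarrow> 'a \<Rightarrow> bool" where
  "adj E u v \<longleftrightarrow> {u, v} \<in> E"

definition degree :: "'a set set \<Rightarrow> 'a \<Rightarrow> nat" where
  "degree E v = card {u. {u, v} \<in> E}"

definition max_degree_le :: "'a set \<Rightarrow> 'a set set \<Rightarrow> nat \<Rightarrow> bool" where
  "max_degree_le V E k \<longleftrightarrow> (\<forall>v\<in>V. degree E v \<le> k)"

definition dist2_coloring :: "'a set \<Rightarrow> 'a set set \<Rightarrow> nat \<Rightarrow> ('a \<Rightarrow> nat) \<Rightarrow> bool" where
  "dist2_coloring V E k c \<longleftrightarrow>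
     (\<forall>v\<in>V. c v < k) \<and>
     (\<forall>u\<in>V. \<forall>v\<in>V. u \<noteq> v \<and> (adj E u v \<or> (\<exists>w. adj E u w \<and> adj E w v)) \<longrightarrow> c u \<noteq> c v)"

definition chi2 :: "'a set \<Rightarrow> 'a set set \<Rightarrow> nat" where
  "chi2 V E = (LEAST k. \<exists>c. dist2_coloring V E k c)"

text \<open>Combinatorial embeddings (rotation systems).\<close>
definition darts :: "'a set set \<Rightarrow> ('a \<times> 'a) set" where
  "darts E = {(u, v). {u, v} \<in> E \<and> u \<noteq> v}"

definition rotation_system :: "'a set set \<Rightarrow> ('a \<times> 'a \<Rightarrow> 'a \<times> 'a) \<Rightarrow> bool" where
  "rotation_system E rho \<longleftrightarrow>
     bij_betw rho (darts E) (darts E) \<and>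
     (\<forall>d\<in>darts E. fst (rho d) = fst d) \<and>
     (\<forall>d\<in>darts E. \<forall>d'\<in>darts E. fst d = fst d' \<longrightarrow> (\<exists>n. (rho ^^ n) d = d'))"

text \<open>Face permutation: after traversing dart (u,v), continue with the successor of (v,u)
  in the rotation at v.  Faces are the orbits of this permutation; the degree of a face is
  the number of darts in it (edges counted with multiplicity).\<close>
definition face_perm :: "('a \<times> 'a \<Rightarrow> 'a \<times> 'a) \<Rightarrow> 'a \<times> 'a \<Rightarrow> 'a \<times> 'a" where
  "face_perm rho d = rho (snd d, fst d)"

definition face_of :: "('a \<times> 'a \<Rightarrow> 'a \<times> 'a) \<Rightarrow> 'a \<times> 'a \<Rightarrow> ('a \<times> 'a) set" where
  "face_of rho d = {(face_perm rho ^^ n) d | n. True}"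

definition faces :: "'a set set \<Rightarrow> ('a \<times> 'a \<Rightarrow> 'a \<times> 'a) \<Rightarrow> ('a \<times> 'a) set set" where
  "faces E rho = face_of rho ` darts E"

definition face_degree :: "('a \<times> 'a) set \<Rightarrow> nat" where
  "face_degree f = card f"

definition incident_face :: "'a \<Rightarrow> ('a \<times> 'a) set \<Rightarrow> bool" where
  "incident_face v f \<longleftrightarrow> (\<exists>d\<in>f. fst d = v)"

definition component :: "'a set \<Rightarrow> 'a set set \<Rightarrow> 'a \<Rightarrow> 'a set" where
  "component V E v = {w\<in>V. (v, w) \<in> {(x, y). adj E x y}\<^sup>*}"

text \<open>A rotation system is a planar embedding iff every connected component with at least
  one edge satisfies Euler's formula V - E + F = 2 (Euler genus 0).\<close>
definition planar_embedding :: "'a set \<Rightarrow> 'a set set \<Rightarrow> ('a \<times> 'a \<Rightarrow> 'a \<times> 'a) \<Rightarrow> bool" where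
  "planar_embedding V E rho \<longleftrightarrow> rotation_system E rho \<and>
     (\<forall>v\<in>V. degree E v > 0 \<longrightarrow>
        (let C = component V E v in
          int (card C) - int (card {e\<in>E. e \<subseteq> C})
            + int (card {f\<in>faces E rho. \<forall>d\<in>f. fst d \<in> C}) = 2))"

definition planar :: "'a set \<Rightarrow> 'a set set \<Rightarrow> bool" where
  "planar V E \<longleftrightarrow> (\<exists>rho. planar_embedding V E rho)"

end

theory Submission
  imports Defs
begin


definition orb :: "('b \<Rightarrow> 'b) \<Rightarrow> 'b \<Rightarrow> 'b set" where
  "orb f x = {(f ^^ n) x | n. True}"

definition pon :: "('b \<Rightarrow> 'b) \<Rightarrow> 'b set \<Rightarrow> bool" where
  "pon f S \<longleftrightarrow> finite S \<and> inj_on f S \<and> f ` S \<subseteq> S"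

lemma orb_iff: "y \<in> orb f x \<longleftrightarrow> (\<exists>n. (f ^^ n) x = y)"
  unfolding orb_def by auto

lemma orb_self[simp]: "x \<in> orb f x"
  unfolding orb_iff by (metis funpow_0)

lemma orb_step: "y \<in> orb f x \<Longrightarrow> f y \<in> orb f x"
  unfolding orb_iff by (metis comp_apply funpow.simps(2))

lemma orb_f[simp]: "f x \<in> orb f x"
  by (rule orb_step[OF orb_self])

lemma funpow_add_app:
  fixes f :: "'b \<Rightarrow> 'b" and m n :: nat and x :: 'b
  shows "(f ^^ m) ((f ^^ n) x) = (f ^^ (m + n)) x"
  by (simp add: funpow_add)

lemma orb_image: "f ` orb f x \<subseteq> orb f x"
proof
  fix y assume "y \<in> f ` orb f x"
  then obtain z where "z \<in> orb f x" "y = f z" by blast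
  then show "y \<in> orb f x" using orb_step[of z f x] by simp
qed

lemma orb_trans: "y \<in> orb f x \<Longrightarrow> z \<in> orb f y \<Longrightarrow> z \<in> orb f x"
proof -
  assume a: "y \<in> orb f x" "z \<in> orb f y"
  obtain n where n: "(f ^^ n) x = y" using a(1) unfolding orb_iff by blast
  obtain m where m: "(f ^^ m) y = z" using a(2) unfolding orb_iff by blast
  have "(f ^^ (m + n)) x = z" using n m funpow_add_app[where f=f and m=m and n=n and x=x] by simp
  then show ?thesis unfolding orb_iff by blast
qed

lemma orb_sub: assumes "y \<in> orb f x" shows "orb f y \<subseteq> orb f x"
  using orb_trans[OF assms] by blast

lemma funpow_closed: "f ` A \<subseteq> A \<Longrightarrow> x \<in> A \<Longrightarrow> (f ^^ n) x \<in> A"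
proof -
  assume a: "f ` A \<subseteq> A" "x \<in> A"
  show ?thesis
  proof (induction n)
    case 0 then show ?case using a by simp
  next
    case (Suc n) then show ?case using a(1) by (simp add: image_subset_iff)
  qed
qed

lemma orb_closed: assumes "f ` A \<subseteq> A" "x \<in> A" shows "orb f x \<subseteq> A"
proof
  fix y assume "y \<in> orb f x"
  then obtain n where "(f ^^ n) x = y" unfolding orb_iff by blast
  then show "y \<in> A" using funpow_closed[OF assms, of n] by simp
qed

lemma funpow_inj:
  assumes "inj_on f S" "f ` S \<subseteq> S" "a \<in> S" "b \<in> S" "(f ^^ i) a = (f ^^ i) b"
  shows "a = b"
  using assms(5)
proof (induction i)
  case 0 then show ?case by simp
next
  case (Suc i)
  have "(f ^^ i) a \<in> S" "(f ^^ i) b \<in> S" using funpow_closed assms by metis+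
  with Suc.prems have "(f ^^ i) a = (f ^^ i) b" using assms(1) by (simp add: inj_on_eq_iff)
  then show ?case using Suc.IH by simp
qed

lemma pon_period:
  assumes "pon f S" "x \<in> S"
  shows "\<exists>m>0. (f ^^ m) x = x"
proof -
  have fin: "finite S" and inj: "inj_on f S" and cl: "f ` S \<subseteq> S" using assms(1) unfolding pon_def by auto
  let ?g = "\<lambda>n. (f ^^ n) x"
  have "?g ` {0..card S} \<subseteq> S" using funpow_closed[OF cl assms(2)] by auto
  moreover have "\<not> card {0..card S} \<le> card S" by simp
  ultimately have "\<not> inj_on ?g {0..card S}" using card_inj_on_le[OF _ _ fin] by blast
  then obtain i j where ij: "i \<in> {0..card S}" "j \<in> {0..card S}" "i \<noteq> j" "?g i = ?g j"
    unfolding inj_on_def by blast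
  have "\<exists>i j. i < j \<and> ?g i = ?g j"
    using ij by (metis linorder_neqE_nat)
  then obtain i j where ij2: "i < j" "?g i = ?g j" by blast
  have "(f ^^ i) ((f ^^ (j - i)) x) = (f ^^ j) x"
    using ij2(1) using funpow_add_app[where f=f and m=i and n="j - i" and x=x] by simp
  then have "(f ^^ i) ((f ^^ (j - i)) x) = (f ^^ i) x" using ij2(2) by simp
  then have "(f ^^ (j - i)) x = x"
    using funpow_inj[OF inj cl funpow_closed[OF cl assms(2)] assms(2)] by blast
  then show ?thesis using ij2(1) by (intro exI[of _ "j - i"]) simp
qed

lemma funpow_period_mult: "(f ^^ m) x = x \<Longrightarrow> (f ^^ (m * k)) x = x"
proof (induction k)
  case 0 then show ?case by simp
next
  case (Suc k)
  have "(f ^^ (m * Suc k)) x = (f ^^ m) ((f ^^ (m * k)) x)"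
    by (simp add: funpow_add)
  then show ?case using Suc by simp
qed

lemma orb_sym:
  assumes "pon f S" "x \<in> S" "y \<in> orb f x"
  shows "x \<in> orb f y"
proof -
  obtain n where n: "(f ^^ n) x = y" using assms(3) unfolding orb_iff by blast
  obtain m where m: "m > 0" "(f ^^ m) x = x" using pon_period[OF assms(1,2)] by blast
  have mn: "(f ^^ (m * n)) x = x" using funpow_period_mult[OF m(2)] .
  have "m * n = (m * n - n) + n" using m(1) by (simp add: le_add_diff_inverse2)
  then have "(f ^^ (m * n - n)) y = x"
    using mn n funpow_add_app[where f=f and m="m * n - n" and n=n and x=x] by simp
  then show ?thesis unfolding orb_iff by blast
qed

lemma orb_eq:
  assumes "pon f S" "x \<in> S" "y \<in> orb f x"
  shows "orb f y = orb f x"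
  using orb_sub[OF assms(3)] orb_sub[OF orb_sym[OF assms]] by (rule subset_antisym)

lemma pon_orb_sub: "pon f S \<Longrightarrow> x \<in> S \<Longrightarrow> orb f x \<subseteq> S"
  unfolding pon_def using orb_closed[of f S x] by simp

lemma orb_cong:
  assumes "\<forall>z\<in>A. f z = g z" "f ` A \<subseteq> A" "x \<in> A"
  shows "orb f x = orb g x"
proof -
  have "\<forall>n. (f ^^ n) x = (g ^^ n) x"
  proof
    fix n show "(f ^^ n) x = (g ^^ n) x"
    proof (induction n)
      case 0 then show ?case by simp
    next
      case (Suc n)
      have "(f ^^ n) x \<in> A" using funpow_closed assms(2,3) by metis
      then show ?case using Suc assms(1) by simp
    qed
  qed
  then show ?thesis unfolding orb_def by simp
qed

lemma orb_disj:
  assumes "pon f S" "x \<in> S" "y \<in> S" "z \<in> orb f x" "z \<in> orb f y"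
  shows "orb f x = orb f y"
  using orb_eq[OF assms(1,2,4)] orb_eq[OF assms(1,3,5)] by simp

lemma pon_bij: "pon f S \<Longrightarrow> bij_betw f S S"
  unfolding pon_def bij_betw_def using endo_inj_surj[of S f] by simp

lemma bij_pon: "finite S \<Longrightarrow> bij_betw f S S \<Longrightarrow> pon f S"
  unfolding pon_def bij_betw_def by auto

section \<open>Removing an element from its cycle\<close>

definition rem :: "('b \<Rightarrow> 'b) \<Rightarrow> 'b \<Rightarrow> 'b \<Rightarrow> 'b" where
  "rem f p x = (if f x = p then f p else f x)"

lemma rem_pon:
  assumes "pon f S" "p \<in> S" "f p \<noteq> p"
  shows "pon (rem f p) (S - {p})"
proof -
  have fin: "finite S" and inj: "inj_on f S" and cl: "f ` S \<subseteq> S" using assms(1) unfolding pon_def by auto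
  have "rem f p ` (S - {p}) \<subseteq> S - {p}"
  proof
    fix y assume "y \<in> rem f p ` (S - {p})"
    then obtain x where x: "x \<in> S - {p}" "y = rem f p x" by blast
    show "y \<in> S - {p}"
    proof (cases "f x = p")
      case True then show ?thesis using x assms cl unfolding rem_def by auto
    next
      case False then show ?thesis using x assms cl unfolding rem_def by auto
    qed
  qed
  moreover have "inj_on (rem f p) (S - {p})"
  proof (rule inj_onI)
    fix x y assume xy: "x \<in> S - {p}" "y \<in> S - {p}" "rem f p x = rem f p y"
    show "x = y"
    proof (cases "f x = p"; cases "f y = p")
      assume "f x = p" "f y = p" then show ?thesis using inj xy by (metis DiffD1 inj_on_eq_iff)
    next
      assume a: "f x = p" "f y \<noteq> p"
      then have "f p = f y" using xy unfolding rem_def by simp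
      then have "p = y" using inj xy assms(2) by (meson DiffD1 inj_on_eq_iff)
      then show ?thesis using xy by simp
    next
      assume a: "f x \<noteq> p" "f y = p"
      then have "f x = f p" using xy unfolding rem_def by simp
      then have "x = p" using inj xy assms(2) by (meson DiffD1 inj_on_eq_iff)
      then show ?thesis using xy by simp
    next
      assume a: "f x \<noteq> p" "f y \<noteq> p"
      then have "f x = f y" using xy unfolding rem_def by simp
      then show ?thesis using inj xy by (meson DiffD1 inj_on_eq_iff)
    qed
  qed
  ultimately show ?thesis using fin unfolding pon_def by auto
qed

lemma rem_orb:
  assumes "pon f S" "p \<in> S" "f p \<noteq> p" "x \<in> S - {p}"
  shows "orb (rem f p) x = orb f x - {p}"
proof
  let ?A = "orb f x - {p}"
  have "rem f p ` ?A \<subseteq> ?A"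
  proof
    fix y assume "y \<in> rem f p ` ?A"
    then obtain z where z: "z \<in> ?A" "y = rem f p z" by blast
    show "y \<in> ?A"
    proof (cases "f z = p")
      case True
      then have "p \<in> orb f x" using z orb_step by fastforce
      then have "f p \<in> orb f x" by (rule orb_step)
      then show ?thesis using z True assms(3) unfolding rem_def by simp
    next
      case False then show ?thesis using z orb_step unfolding rem_def by fastforce
    qed
  qed
  moreover have "x \<in> ?A" using assms(4) by simp
  ultimately show "orb (rem f p) x \<subseteq> ?A" by (rule orb_closed)
next
  have "\<forall>n. (f ^^ n) x \<noteq> p \<longrightarrow> (f ^^ n) x \<in> orb (rem f p) x"
  proof
    fix n show "(f ^^ n) x \<noteq> p \<longrightarrow> (f ^^ n) x \<in> orb (rem f p) x"
    proof (induction n rule: less_induct)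
      case (less n)
      show ?case
      proof (cases n)
        case 0 then show ?thesis by simp
      next
        case (Suc k)
        show ?thesis
        proof (cases "(f ^^ k) x = p")
          case False
          then have "(f ^^ k) x \<in> orb (rem f p) x" using less Suc by simp
          moreover have "rem f p ((f ^^ k) x) = (f ^^ n) x" if "(f ^^ n) x \<noteq> p"
            using that Suc unfolding rem_def by simp
          ultimately show ?thesis using orb_step by metis
        next
          case True
          have "k \<noteq> 0" using True assms(4) by (metis DiffD2 funpow_0 singletonI)
          then obtain j where j: "k = Suc j" by (metis not0_implies_Suc)
          have fj: "(f ^^ j) x \<noteq> p"
          proof
            assume "(f ^^ j) x = p"
            then have "(f ^^ k) x = f p" using j by simp
            then show False using True assms(3) by simp
          qed
          then have "(f ^^ j) x \<in> orb (rem f p) x" using less Suc j by simp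
          moreover have "rem f p ((f ^^ j) x) = (f ^^ n) x"
            using True j Suc unfolding rem_def by simp
          ultimately show ?thesis using orb_step by metis
        qed
      qed
    qed
  qed
  then show "orb f x - {p} \<subseteq> orb (rem f p) x"
    unfolding orb_def by blast
qed

lemma rem_nf:
  assumes "pon f S" "p \<in> S" "f p \<noteq> p"
  shows "card (orb (rem f p) ` (S - {p})) = card (orb f ` S)"
proof -
  have cl: "f ` S \<subseteq> S" using assms(1) unfolding pon_def by auto
  have fpS: "f p \<in> S" using cl assms(2) by auto
  have img: "orb (rem f p) ` (S - {p}) = (\<lambda>X. X - {p}) ` (orb f ` S)"
  proof
    show "orb (rem f p) ` (S - {p}) \<subseteq> (\<lambda>X. X - {p}) ` (orb f ` S)"
    proof
      fix X assume "X \<in> orb (rem f p) ` (S - {p})"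
      then obtain x where x: "x \<in> S - {p}" "X = orb (rem f p) x" by blast
      then have "X = orb f x - {p}" using rem_orb[OF assms x(1)] by simp
      then show "X \<in> (\<lambda>X. X - {p}) ` (orb f ` S)" using x(1) by blast
    qed
  next
    show "(\<lambda>X. X - {p}) ` (orb f ` S) \<subseteq> orb (rem f p) ` (S - {p})"
    proof
      fix X assume "X \<in> (\<lambda>X. X - {p}) ` (orb f ` S)"
      then obtain x where x: "x \<in> S" "X = orb f x - {p}" by blast
      show "X \<in> orb (rem f p) ` (S - {p})"
      proof (cases "x = p")
        case False
        have xin: "x \<in> S - {p}" using x(1) False by simp
        have "X = orb (rem f p) x" using rem_orb[OF assms xin] x(2) by simp
        with xin show ?thesis by (rule rev_image_eqI)
      next
        case True
        have "orb f (f p) = orb f p" using orb_eq[OF assms(1,2) orb_f] .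
        moreover have "orb (rem f p) (f p) = orb f (f p) - {p}" using rem_orb[OF assms, of "f p"] fpS assms(3) by simp
        ultimately have Xe: "X = orb (rem f p) (f p)" using x True by simp
        have "f p \<in> S - {p}" using fpS assms(3) by simp
        then show ?thesis using Xe by (rule rev_image_eqI)
      qed
    qed
  qed
  have inj: "inj_on (\<lambda>X. X - {p}) (orb f ` S)"
  proof (rule inj_onI)
    fix X1 X2 assume o: "X1 \<in> orb f ` S" "X2 \<in> orb f ` S" "X1 - {p} = X2 - {p}"
    obtain x y where xy: "x \<in> S" "y \<in> S" "X1 = orb f x" "X2 = orb f y" using o by blast
    obtain z where z: "z \<in> X1 - {p}"
    proof (cases "x = p")
      case True then show ?thesis using that[of "f p"] xy assms(3) by auto
    next
      case False then show ?thesis using that[of x] xy by auto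
    qed
    then have "z \<in> orb f x" "z \<in> orb f y" using o xy by auto
    then show "X1 = X2" using orb_disj[OF assms(1) xy(1,2)] xy by simp
  qed
  show ?thesis unfolding img using card_image[OF inj] .
qed

section \<open>Swapping images: merging two cycles\<close>

definition swp :: "('b \<Rightarrow> 'b) \<Rightarrow> 'b \<Rightarrow> 'b \<Rightarrow> 'b \<Rightarrow> 'b" where
  "swp f p q = f(p := f q, q := f p)"

lemma swp_pon:
  assumes "pon f S" "p \<in> S" "q \<in> S" "p \<noteq> q"
  shows "pon (swp f p q) S"
proof -
  have fin: "finite S" and inj: "inj_on f S" and cl: "f ` S \<subseteq> S" using assms(1) unfolding pon_def by auto
  have "swp f p q ` S \<subseteq> S" using cl assms unfolding swp_def by auto
  moreover have "inj_on (swp f p q) S"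
  proof (rule inj_onI)
    fix x y assume xy: "x \<in> S" "y \<in> S" "swp f p q x = swp f p q y"
    have e: "\<And>a b. a \<in> S \<Longrightarrow> b \<in> S \<Longrightarrow> f a = f b \<Longrightarrow> a = b" using inj by (meson inj_on_eq_iff)
    show "x = y"
      using xy assms(2,3,4) e[of x y] e[of x p] e[of x q] e[of y p] e[of y q] e[of p q]
      unfolding swp_def by (auto split: if_splits)
  qed
  ultimately show ?thesis using fin unfolding pon_def by auto
qed

lemma walk_eq:
  assumes "\<forall>i<n. (f ^^ i) z \<notin> B" "\<forall>w. w \<notin> B \<longrightarrow> g w = f w"
  shows "(g ^^ n) z = (f ^^ n) z"
  using assms(1)
proof (induction n)
  case 0 then show ?case by simp
next
  case (Suc n)
  then have "(g ^^ n) z = (f ^^ n) z" by simp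
  moreover have "(f ^^ n) z \<notin> B" using Suc.prems by simp
  ultimately show ?case using assms(2) by simp
qed

lemma swp_half:
  assumes "pon f S" "p \<in> S" "q \<notin> orb f p" "\<forall>z. z \<notin> {p, q} \<longrightarrow> g z = f z" "g q = f p"
  shows "orb f p \<subseteq> orb g q"
proof
  fix y assume y: "y \<in> orb f p"
  have fp: "orb f (f p) = orb f p" using orb_eq[OF assms(1,2) orb_f] .
  then have "\<exists>n. (f ^^ n) (f p) = y" using y unfolding orb_iff[symmetric] by simp
  then obtain n where n: "(f ^^ n) (f p) = y" "\<forall>m<n. (f ^^ m) (f p) \<noteq> y"
    using ex_has_least_nat[of "\<lambda>n. (f ^^ n) (f p) = y" _ "\<lambda>n. n"] by (metis not_less)
  have "\<forall>i<n. (f ^^ i) (f p) \<notin> {p, q}"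
  proof (intro allI impI)
    fix i assume i: "i < n"
    have inO: "(f ^^ i) (f p) \<in> orb f p" using fp orb_iff[of _ f "f p"] by blast
    show "(f ^^ i) (f p) \<notin> {p, q}"
    proof
      assume "(f ^^ i) (f p) \<in> {p, q}"
      then have "(f ^^ i) (f p) = p" using inO assms(3) by auto
      then have "(f ^^ Suc i) (f p) = f p" by simp
      then have "(f ^^ (n - Suc i)) (f p) = y"
        using n(1) i funpow_add_app[where f=f and m="n - Suc i" and n="Suc i" and x="f p"] by simp
      moreover have "n - Suc i < n" using i by simp
      ultimately show False using n(2) by blast
    qed
  qed
  then have "(g ^^ n) (f p) = y" using walk_eq[of n f "f p" "{p,q}" g] assms(4) n(1) by simp
  then have "(g ^^ n) (g q) = y" using assms(5) by simp
  moreover have "(g ^^ Suc n) q = (g ^^ n) (g q)" by (simp only: funpow_Suc_right comp_apply)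
  ultimately have "(g ^^ Suc n) q = y" by simp
  then show "y \<in> orb g q" unfolding orb_iff by blast
qed

lemma swp_nf:
  assumes "pon f S" "p \<in> S" "q \<in> S" "p \<noteq> q" "q \<notin> orb f p"
  shows "card (orb (swp f p q) ` S) + 1 = card (orb f ` S)"
proof -
  let ?g = "swp f p q"
  let ?Op = "orb f p" and ?Oq = "orb f q"
  let ?U = "?Op \<union> ?Oq"
  have fin: "finite S" and cl: "f ` S \<subseteq> S" using assms(1) unfolding pon_def by auto
  have gpon: "pon ?g S" using swp_pon[OF assms(1-4)] .
  have gp: "?g p = f q" and gq: "?g q = f p" using assms(4) unfolding swp_def by auto
  have go: "\<forall>z. z \<notin> {p, q} \<longrightarrow> ?g z = f z" unfolding swp_def by auto
  have pq: "p \<notin> ?Oq" using orb_sym[OF assms(1,3)] assms(5) by blast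
  have s1: "?Op \<subseteq> orb ?g q" using swp_half[OF assms(1,2,5)] go gq by blast
  have s2: "?Oq \<subseteq> orb ?g p" using swp_half[OF assms(1,3) pq, of ?g] go gp by blast
  have Ucl: "?g ` ?U \<subseteq> ?U"
  proof
    fix y assume "y \<in> ?g ` ?U"
    then obtain z where z: "z \<in> ?U" "y = ?g z" by blast
    show "y \<in> ?U"
    proof (cases "z \<in> {p,q}")
      case True then show ?thesis using z gp gq by auto
    next
      case False then show ?thesis using z go orb_step by fastforce
    qed
  qed
  have gpU: "orb ?g p = ?U"
  proof
    show "orb ?g p \<subseteq> ?U" using orb_closed[OF Ucl] by simp
  next
    have "q \<in> orb ?g p" using s2 by auto
    then have "orb ?g q \<subseteq> orb ?g p" by (rule orb_sub)
    then show "?U \<subseteq> orb ?g p" using s1 s2 by auto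
  qed
  have inU: "orb ?g x = ?U" if "x \<in> S" "x \<in> ?U" for x
  proof -
    have "x \<in> orb ?g p" using gpU that by simp
    then show ?thesis using orb_eq[OF gpon assms(2)] gpU by metis
  qed
  have outU: "orb ?g x = orb f x" if "x \<in> S" "x \<notin> ?U" for x
  proof -
    have dis: "orb f x \<inter> ?U = {}"
    proof (rule ccontr)
      assume "orb f x \<inter> ?U \<noteq> {}"
      then obtain z where "z \<in> orb f x" "z \<in> ?Op \<or> z \<in> ?Oq" by blast
      then have "orb f x = ?Op \<or> orb f x = ?Oq"
        using orb_disj[OF assms(1) that(1) assms(2)] orb_disj[OF assms(1) that(1) assms(3)] by blast
      then show False using that orb_self[of x f] by blast
    qed
    have pn: "p \<notin> orb f x" "q \<notin> orb f x" using dis orb_self[of p f] orb_self[of q f] by blast+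
    have "\<forall>z\<in>orb f x. f z = ?g z"
    proof
      fix z assume "z \<in> orb f x"
      then have "z \<notin> {p, q}" using pn by auto
      then show "f z = ?g z" using go by simp
    qed
    moreover have "f ` orb f x \<subseteq> orb f x" by (rule orb_image)
    ultimately show ?thesis using orb_cong[of "orb f x" f ?g x] by simp
  qed
  let ?R = "orb f ` (S - ?U)"
  have eg: "orb ?g ` S = insert ?U ?R"
  proof
    show "orb ?g ` S \<subseteq> insert ?U ?R"
    proof
      fix X assume "X \<in> orb ?g ` S"
      then obtain x where x: "x \<in> S" "X = orb ?g x" by blast
      show "X \<in> insert ?U ?R"
      proof (cases "x \<in> ?U")
        case True then show ?thesis using inU[OF x(1) True] x by simp
      next
        case False
        then have "X = orb f x" using outU[OF x(1) False] x by simp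
        then show ?thesis using x(1) False by blast
      qed
    qed
  next
    show "insert ?U ?R \<subseteq> orb ?g ` S"
    proof -
      have "?U \<in> orb ?g ` S" using gpU assms(2) by (metis image_eqI)
      moreover have "?R \<subseteq> orb ?g ` S"
      proof
        fix X assume "X \<in> ?R"
        then obtain x where x: "x \<in> S" "x \<notin> ?U" "X = orb f x" by blast
        then have "X = orb ?g x" using outU[OF x(1,2)] by simp
        then show "X \<in> orb ?g ` S" using x(1) by blast
      qed
      ultimately show ?thesis by auto
    qed
  qed
  have ef: "orb f ` S = insert ?Op (insert ?Oq ?R)"
  proof
    show "orb f ` S \<subseteq> insert ?Op (insert ?Oq ?R)"
    proof
      fix X assume "X \<in> orb f ` S"
      then obtain x where x: "x \<in> S" "X = orb f x" by blast
      show "X \<in> insert ?Op (insert ?Oq ?R)"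
      proof (cases "x \<in> ?U")
        case True
        then have "X = ?Op \<or> X = ?Oq"
        proof
          assume "x \<in> ?Op" then show ?thesis using x orb_eq[OF assms(1,2)] by metis
        next
          assume "x \<in> ?Oq" then show ?thesis using x orb_eq[OF assms(1,3)] by metis
        qed
        then show ?thesis by auto
      next
        case False then show ?thesis using x by auto
      qed
    qed
  next
    show "insert ?Op (insert ?Oq ?R) \<subseteq> orb f ` S" using assms(2,3) by auto
  qed
  have finR: "finite ?R" using fin by simp
  have n1: "?U \<notin> ?R"
  proof
    assume "?U \<in> ?R"
    then obtain x where x: "x \<in> S" "x \<notin> ?U" "?U = orb f x" by blast
    then have "p \<in> orb f x" by simp
    then have "x \<in> ?Op" using orb_sym[OF assms(1) x(1)] by blast
    then show False using x by simp
  qed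
  have n2: "?Op \<notin> ?R"
  proof
    assume "?Op \<in> ?R"
    then obtain x where x: "x \<in> S" "x \<notin> ?U" "?Op = orb f x" by blast
    then show False using orb_self[of x f] by auto
  qed
  have n3: "?Oq \<notin> ?R"
  proof
    assume "?Oq \<in> ?R"
    then obtain x where x: "x \<in> S" "x \<notin> ?U" "?Oq = orb f x" by blast
    then show False using orb_self[of x f] by auto
  qed
  have n4: "?Op \<noteq> ?Oq" using assms(5) orb_self[of q f] by auto
  show ?thesis unfolding eg ef using finR n1 n2 n3 n4 by simp
qed



lemma face_of_orb: "face_of \<rho> d = orb (face_perm \<rho>) d"
  unfolding face_of_def orb_def by simp

lemma darts_iff: "(x, y) \<in> darts E \<longleftrightarrow> {x, y} \<in> E \<and> x \<noteq> y"
  unfolding darts_def by simp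

lemma dart_rev: "d \<in> darts E \<Longrightarrow> (snd d, fst d) \<in> darts E"
  unfolding darts_def by (auto simp: insert_commute)

lemma dart_edge: "d \<in> darts E \<Longrightarrow> {fst d, snd d} \<in> E"
  unfolding darts_def by auto

lemma dart_neq: "d \<in> darts E \<Longrightarrow> fst d \<noteq> snd d"
  unfolding darts_def by auto

lemma sg_finE: "simple_graph V E \<Longrightarrow> finite E"
  unfolding simple_graph_def by (meson Pow_iff finite_Pow_iff finite_subset subsetI)

lemma sg_edge_sub: "simple_graph V E \<Longrightarrow> {x, y} \<in> E \<Longrightarrow> x \<in> V \<and> y \<in> V"
  unfolding simple_graph_def by auto

lemma finite_darts: "simple_graph V E \<Longrightarrow> finite (darts E)"
proof -
  assume sg: "simple_graph V E"
  have "darts E \<subseteq> V \<times> V" using sg_edge_sub[OF sg] unfolding darts_def by auto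
  moreover have "finite V" using sg unfolding simple_graph_def by simp
  ultimately show ?thesis by (meson finite_SigmaI finite_subset)
qed

lemma rs_pon: "simple_graph V E \<Longrightarrow> rotation_system E \<rho> \<Longrightarrow> pon \<rho> (darts E)"
  unfolding rotation_system_def pon_def bij_betw_def using finite_darts by auto

lemma rs_in: "rotation_system E \<rho> \<Longrightarrow> d \<in> darts E \<Longrightarrow> \<rho> d \<in> darts E"
  unfolding rotation_system_def bij_betw_def by auto

lemma rs_fst: "rotation_system E \<rho> \<Longrightarrow> d \<in> darts E \<Longrightarrow> fst (\<rho> d) = fst d"
  unfolding rotation_system_def by auto

lemma rs_trans: "rotation_system E \<rho> \<Longrightarrow> d \<in> darts E \<Longrightarrow> d' \<in> darts E \<Longrightarrow> fst d = fst d' \<Longrightarrow> d' \<in> orb \<rho> d"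
  unfolding rotation_system_def orb_iff by auto

lemma fp_in: "rotation_system E \<rho> \<Longrightarrow> d \<in> darts E \<Longrightarrow> face_perm \<rho> d \<in> darts E"
  unfolding face_perm_def using rs_in dart_rev by blast

lemma fp_fst: "rotation_system E \<rho> \<Longrightarrow> d \<in> darts E \<Longrightarrow> fst (face_perm \<rho> d) = snd d"
  unfolding face_perm_def using rs_fst dart_rev by fastforce

lemma fp_pon: 
  assumes "simple_graph V E" "rotation_system E \<rho>"
  shows "pon (face_perm \<rho>) (darts E)"
proof -
  have p: "pon \<rho> (darts E)" using rs_pon assms by blast
  have "inj_on (face_perm \<rho>) (darts E)"
  proof (rule inj_onI)
    fix x y assume xy: "x \<in> darts E" "y \<in> darts E" "face_perm \<rho> x = face_perm \<rho> y"
    then have "(snd x, fst x) = (snd y, fst y)"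
      using p dart_rev[OF xy(1)] dart_rev[OF xy(2)] unfolding face_perm_def pon_def
      by (meson inj_on_eq_iff)
    then show "x = y" by (simp add: prod_eq_iff)
  qed
  moreover have "face_perm \<rho> ` darts E \<subseteq> darts E" using fp_in[OF assms(2)] by blast
  ultimately show ?thesis using finite_darts[OF assms(1)] unfolding pon_def by simp
qed

definition DC :: "'a set set \<Rightarrow> 'a set \<Rightarrow> ('a \<times> 'a) set" where
  "DC E C = {d \<in> darts E. fst d \<in> C}"

lemma comp_step:
  assumes "simple_graph V E" "y \<in> component V E v" "{y, z} \<in> E"
  shows "z \<in> component V E v"
proof -
  have "(v, y) \<in> {(x, y). adj E x y}\<^sup>*" using assms(2) unfolding component_def by simp
  moreover have "(y, z) \<in> {(x, y). adj E x y}" using assms(3) unfolding adj_def by simp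
  ultimately have "(v, z) \<in> {(x, y). adj E x y}\<^sup>*" by (rule rtrancl.rtrancl_into_rtrancl)
  moreover have "z \<in> V" using sg_edge_sub[OF assms(1,3)] by simp
  ultimately show ?thesis unfolding component_def by simp
qed

lemma DC_closed:
  assumes "simple_graph V E" "rotation_system E \<rho>" "C = component V E v"
  shows "face_perm \<rho> ` DC E C \<subseteq> DC E C"
proof
  fix y assume "y \<in> face_perm \<rho> ` DC E C"
  then obtain d where d: "d \<in> DC E C" "y = face_perm \<rho> d" by blast
  have dd: "d \<in> darts E" "fst d \<in> C" using d unfolding DC_def by auto
  have "snd d \<in> C" using comp_step[OF assms(1), of "fst d" v "snd d"] dd dart_edge[OF dd(1)] assms(3) by simp
  then show "y \<in> DC E C" using fp_in[OF assms(2) dd(1)] fp_fst[OF assms(2) dd(1)] d unfolding DC_def by simp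
qed

lemma DC_pon:
  assumes "simple_graph V E" "rotation_system E \<rho>" "C = component V E v"
  shows "pon (face_perm \<rho>) (DC E C)"
proof -
  have p: "pon (face_perm \<rho>) (darts E)" using fp_pon[OF assms(1,2)] .
  have sub: "DC E C \<subseteq> darts E" unfolding DC_def by auto
  show ?thesis using p DC_closed[OF assms] sub unfolding pon_def
    by (meson finite_subset inj_on_subset)
qed

lemma faces_comp:
  assumes "simple_graph V E" "rotation_system E \<rho>" "C = component V E v"
  shows "{f \<in> faces E \<rho>. \<forall>d\<in>f. fst d \<in> C} = orb (face_perm \<rho>) ` DC E C"
proof
  show "{f \<in> faces E \<rho>. \<forall>d\<in>f. fst d \<in> C} \<subseteq> orb (face_perm \<rho>) ` DC E C"
  proof
    fix f assume f: "f \<in> {f \<in> faces E \<rho>. \<forall>d\<in>f. fst d \<in> C}"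
    then obtain d where d: "d \<in> darts E" "f = orb (face_perm \<rho>) d"
      unfolding faces_def face_of_orb by blast
    then have "fst d \<in> C" using f orb_self[of d "face_perm \<rho>"] by auto
    then have "d \<in> DC E C" using d unfolding DC_def by simp
    then show "f \<in> orb (face_perm \<rho>) ` DC E C" using d by blast
  qed
next
  show "orb (face_perm \<rho>) ` DC E C \<subseteq> {f \<in> faces E \<rho>. \<forall>d\<in>f. fst d \<in> C}"
  proof
    fix f assume "f \<in> orb (face_perm \<rho>) ` DC E C"
    then obtain d where d: "d \<in> DC E C" "f = orb (face_perm \<rho>) d" by blast
    have "f \<subseteq> DC E C" using orb_closed[OF DC_closed[OF assms] d(1)] d by simp
    then have "\<forall>d\<in>f. fst d \<in> C" unfolding DC_def by auto
    moreover have "f \<in> faces E \<rho>" using d unfolding faces_def face_of_orb DC_def by blast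
    ultimately show "f \<in> {f \<in> faces E \<rho>. \<forall>d\<in>f. fst d \<in> C}" by simp
  qed
qed

definition chi :: "'a set set \<Rightarrow> ('a \<times> 'a \<Rightarrow> 'a \<times> 'a) \<Rightarrow> 'a set \<Rightarrow> int" where
  "chi E \<rho> C = int (card C) - int (card {e\<in>E. e \<subseteq> C}) + int (card (orb (face_perm \<rho>) ` DC E C))"

lemma planar_chi:
  assumes "simple_graph V E"
  shows "planar_embedding V E \<rho> \<longleftrightarrow> rotation_system E \<rho> \<and>
     (\<forall>v\<in>V. degree E v > 0 \<longrightarrow> chi E \<rho> (component V E v) = 2)"
proof -
  have eq: "int (card (component V E v)) - int (card {e\<in>E. e \<subseteq> component V E v})
            + int (card {f\<in>faces E \<rho>. \<forall>d\<in>f. fst d \<in> component V E v}) = chi E \<rho> (component V E v)"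
    if "rotation_system E \<rho>" for v
    unfolding chi_def using faces_comp[OF assms that, of "component V E v" v] by simp
  show ?thesis unfolding planar_embedding_def Let_def using eq by auto
qed



definition delr :: "('a \<times> 'a \<Rightarrow> 'a \<times> 'a) \<Rightarrow> 'a \<Rightarrow> 'a \<Rightarrow> ('a \<times> 'a \<Rightarrow> 'a \<times> 'a)" where
  "delr \<rho> a b = rem (rem \<rho> (a, b)) (b, a)"

lemma darts_del: "darts (E - {{a, b}}) = darts E - {(a, b), (b, a)}"
  unfolding darts_def by (auto simp: doubleton_eq_iff)

lemma rem_fst:
  assumes "\<forall>d\<in>S. fst (f d) = fst d" "p \<in> S" "d \<in> S"
  shows "fst (rem f p d) = fst d"
  using assms unfolding rem_def by auto

lemma del_rs:
  assumes sg: "simple_graph V E" and rs: "rotation_system E \<rho>" and ab: "{a, b} \<in> E" "a \<noteq> b"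
    and na: "\<rho> (a, b) \<noteq> (a, b)" and nb: "\<rho> (b, a) \<noteq> (b, a)"
  shows "rotation_system (E - {{a, b}}) (delr \<rho> a b)"
    and "pon (delr \<rho> a b) (darts (E - {{a, b}}))"
    and "\<And>d. d \<in> darts (E - {{a, b}}) \<Longrightarrow> orb (delr \<rho> a b) d = orb \<rho> d - {(a, b), (b, a)}"
proof -
  let ?D = "darts E"
  let ?R1 = "rem \<rho> (a, b)"
  have p: "pon \<rho> ?D" using rs_pon[OF sg rs] .
  have abD: "(a, b) \<in> ?D" and baD: "(b, a) \<in> ?D" using ab unfolding darts_def by (auto simp: insert_commute)
  have p1: "pon ?R1 (?D - {(a, b)})" using rem_pon[OF p abD na] .
  have fba: "fst (\<rho> (b, a)) = b" using rs_fst[OF rs baD] by simp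
  have r1ba: "?R1 (b, a) = \<rho> (b, a)" using fba ab(2) unfolding rem_def by auto
  have baD1: "(b, a) \<in> ?D - {(a, b)}" using baD ab(2) by simp
  have nb1: "?R1 (b, a) \<noteq> (b, a)" using r1ba nb by simp
  have p2: "pon (delr \<rho> a b) (?D - {(a, b)} - {(b, a)})"
    unfolding delr_def using rem_pon[OF p1 baD1 nb1] .
  have dd: "?D - {(a, b)} - {(b, a)} = darts (E - {{a, b}})" using darts_del by fastforce
  show p2': "pon (delr \<rho> a b) (darts (E - {{a, b}}))" using p2 dd by simp
  have orbs: "orb (delr \<rho> a b) d = orb \<rho> d - {(a, b), (b, a)}" if "d \<in> darts (E - {{a, b}})" for d
  proof -
    have d1: "d \<in> ?D - {(a, b)} - {(b, a)}" using that dd by simp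
    have "orb (delr \<rho> a b) d = orb ?R1 d - {(b, a)}"
      unfolding delr_def using rem_orb[OF p1 baD1 nb1 d1] .
    also have "\<dots> = orb \<rho> d - {(a, b)} - {(b, a)}"
      using rem_orb[OF p abD na] d1 by simp
    finally show ?thesis by auto
  qed
  then show "\<And>d. d \<in> darts (E - {{a, b}}) \<Longrightarrow> orb (delr \<rho> a b) d = orb \<rho> d - {(a, b), (b, a)}" .
  have f0: "\<forall>d\<in>?D. fst (\<rho> d) = fst d" using rs_fst[OF rs] by blast
  have f1: "\<forall>d\<in>?D - {(a, b)}. fst (?R1 d) = fst d" using rem_fst[OF f0 abD] by blast
  have f2: "\<forall>d\<in>?D - {(a, b)} - {(b, a)}. fst (delr \<rho> a b d) = fst d"
    unfolding delr_def using rem_fst[OF f1 baD1] by blast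
  show "rotation_system (E - {{a, b}}) (delr \<rho> a b)"
    unfolding rotation_system_def
  proof (intro conjI)
    show "bij_betw (delr \<rho> a b) (darts (E - {{a, b}})) (darts (E - {{a, b}}))"
      using pon_bij[OF p2'] .
    show "\<forall>d\<in>darts (E - {{a, b}}). fst (delr \<rho> a b d) = fst d" using f2 dd by simp
    show "\<forall>d\<in>darts (E - {{a, b}}). \<forall>d'\<in>darts (E - {{a, b}}). fst d = fst d' \<longrightarrow>
        (\<exists>n. (delr \<rho> a b ^^ n) d = d')"
    proof (intro ballI impI)
      fix d d' assume dd': "d \<in> darts (E - {{a, b}})" "d' \<in> darts (E - {{a, b}})" "fst d = fst d'"
      have "d \<in> ?D" "d' \<in> ?D" using dd' dd by auto
      then have "d' \<in> orb \<rho> d" using rs_trans[OF rs] dd'(3) by blast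
      moreover have "d' \<notin> {(a, b), (b, a)}" using dd'(2) dd by auto
      ultimately have "d' \<in> orb (delr \<rho> a b) d" using orbs[OF dd'(1)] by simp
      then show "\<exists>n. (delr \<rho> a b ^^ n) d = d'" unfolding orb_iff .
    qed
  qed
qed

lemma comp_del:
  assumes "{a, b} \<in> E" and path: "(a, b) \<in> {(x, y). adj (E - {{a, b}}) x y}\<^sup>*"
  shows "component V (E - {{a, b}}) y = component V E y"
proof -
  let ?R = "{(x, y). adj E x y}" and ?R' = "{(x, y). adj (E - {{a, b}}) x y}"
  have s1: "?R' \<subseteq> ?R" unfolding adj_def by auto
  have symR': "sym ?R'" unfolding sym_def adj_def by (auto simp: insert_commute)
  have path2: "(b, a) \<in> ?R'\<^sup>*" using path sym_rtrancl[OF symR'] unfolding sym_def by blast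
  have s2: "?R \<subseteq> ?R'\<^sup>*"
  proof
    fix p assume "p \<in> ?R"
    then obtain x z where p: "p = (x, z)" "{x, z} \<in> E" unfolding adj_def by auto
    show "p \<in> ?R'\<^sup>*"
    proof (cases "{x, z} = {a, b}")
      case True
      then have "(x, z) = (a, b) \<or> (x, z) = (b, a)" by (auto simp: doubleton_eq_iff)
      then show ?thesis using path path2 p by auto
    next
      case False
      then have "(x, z) \<in> ?R'" using p unfolding adj_def by simp
      then show ?thesis using p by auto
    qed
  qed
  have "?R\<^sup>* = ?R'\<^sup>*" using rtrancl_subset[OF s1 s2] by simp
  then show ?thesis unfolding component_def by simp
qed

lemma deg_pos_iff:
  assumes "simple_graph V E"
  shows "degree E y > 0 \<longleftrightarrow> (\<exists>z. {z, y} \<in> E)"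
proof -
  have "{u. {u, y} \<in> E} \<subseteq> V" using sg_edge_sub[OF assms] by auto
  then have "finite {u. {u, y} \<in> E}" using assms unfolding simple_graph_def by (meson finite_subset)
  then show ?thesis unfolding degree_def by (simp add: card_gt_0_iff)
qed

lemma sg_del: "simple_graph V E \<Longrightarrow> simple_graph V (E - X)"
  unfolding simple_graph_def by auto

lemma del_planar:
  assumes sg: "simple_graph V E" and rs: "rotation_system E \<rho>" and ab: "{a, b} \<in> E" "a \<noteq> b"
    and na: "\<rho> (a, b) \<noteq> (a, b)" and nb: "\<rho> (b, a) \<noteq> (b, a)"
    and nf: "(b, a) \<notin> face_of \<rho> (a, b)"
    and path: "(a, b) \<in> {(x, y). adj (E - {{a, b}}) x y}\<^sup>*"
  shows "planar_embedding V E \<rho> \<longleftrightarrow> planar_embedding V (E - {{a, b}}) (delr \<rho> a b)"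
proof -
  let ?E' = "E - {{a, b}}" and ?r = "delr \<rho> a b"
  let ?D = "darts E"
  have sg': "simple_graph V ?E'" using sg_del[OF sg] .
  have rs': "rotation_system ?E' ?r" using del_rs(1)[OF sg rs ab na nb] .
  have abD: "(a, b) \<in> ?D" and baD: "(b, a) \<in> ?D" using ab unfolding darts_def by (auto simp: insert_commute)
  have comp: "component V ?E' y = component V E y" for y using comp_del[OF ab(1) path] .
  have deg: "degree E y > 0 \<longleftrightarrow> degree ?E' y > 0" for y
  proof -
    have "(\<exists>z. {z, y} \<in> E) \<longleftrightarrow> (\<exists>z. {z, y} \<in> ?E')"
    proof
      assume "\<exists>z. {z, y} \<in> E"
      then obtain z where z: "{z, y} \<in> E" by blast
      show "\<exists>z. {z, y} \<in> ?E'"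
      proof (cases "y = a \<or> y = b")
        case False
        then have "{z, y} \<noteq> {a, b}" by (auto simp: doubleton_eq_iff)
        then show ?thesis using z by blast
      next
        case True
        then show ?thesis
        proof
          assume y: "y = a"
          obtain c where c: "\<rho> (a, b) = (a, c)" using rs_fst[OF rs abD] by (metis fst_conv prod.collapse)
          have "(a, c) \<in> ?D" using rs_in[OF rs abD] c by simp
          then have "{a, c} \<in> E" "c \<noteq> b" using na c unfolding darts_def by auto
          then have "{c, a} \<in> ?E'" using ab(2) by (auto simp: doubleton_eq_iff insert_commute)
          then show ?thesis using y by blast
        next
          assume y: "y = b"
          obtain c where c: "\<rho> (b, a) = (b, c)" using rs_fst[OF rs baD] by (metis fst_conv prod.collapse)
          have "(b, c) \<in> ?D" using rs_in[OF rs baD] c by simp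
          then have "{b, c} \<in> E" "c \<noteq> a" using nb c unfolding darts_def by auto
          then have "{c, b} \<in> ?E'" using ab(2) by (auto simp: doubleton_eq_iff insert_commute)
          then show ?thesis using y by blast
        qed
      qed
    next
      assume "\<exists>z. {z, y} \<in> ?E'" then show "\<exists>z. {z, y} \<in> E" by blast
    qed
    then show ?thesis using deg_pos_iff[OF sg] deg_pos_iff[OF sg'] by simp
  qed
  have chieq: "chi ?E' ?r (component V E v) = chi E \<rho> (component V E v)" if "v \<in> V" for v
  proof -
    let ?C = "component V E v"
    let ?S = "DC E ?C"
    let ?f = "face_perm \<rho>" and ?f' = "face_perm ?r"
    have cC: "component V ?E' v = ?C" using comp by simp
    show ?thesis
    proof (cases "a \<in> ?C")
      case True
      have bC: "b \<in> ?C" using comp_step[OF sg True ab(1)] .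
      have edges: "{e\<in>?E'. e \<subseteq> ?C} = {e\<in>E. e \<subseteq> ?C} - {{a, b}}" by auto
      have abin: "{a, b} \<in> {e\<in>E. e \<subseteq> ?C}" using ab True bC by simp
      have finE: "finite {e\<in>E. e \<subseteq> ?C}" using sg_finE[OF sg] by simp
      have ecard: "card {e\<in>?E'. e \<subseteq> ?C} + 1 = card {e\<in>E. e \<subseteq> ?C}"
        unfolding edges using card_Diff1_less[OF finE abin] abin finE
        by (metis Suc_eq_plus1 card_Suc_Diff1)
      have pS: "pon ?f ?S" using DC_pon[OF sg rs refl] .
      have abS: "(a, b) \<in> ?S" and baS: "(b, a) \<in> ?S" using abD baD True bC unfolding DC_def by auto
      have neq: "(a, b) \<noteq> (b, a)" using ab(2) by simp
      have nf': "(b, a) \<notin> orb ?f (a, b)" using nf unfolding face_of_orb .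
      let ?h = "swp ?f (a, b) (b, a)"
      have c1: "card (orb ?h ` ?S) + 1 = card (orb ?f ` ?S)" using swp_nf[OF pS abS baS neq nf'] .
      have ph: "pon ?h ?S" using swp_pon[OF pS abS baS neq] .
      have hab: "?h (a, b) = \<rho> (a, b)" using neq unfolding swp_def face_perm_def by simp
      have hba: "?h (b, a) = \<rho> (b, a)" unfolding swp_def face_perm_def by simp
      have hd: "?h d = \<rho> (snd d, fst d)" if "d \<noteq> (a, b)" "d \<noteq> (b, a)" for d
        using that unfolding swp_def face_perm_def by simp
      have nh1: "?h (a, b) \<noteq> (a, b)" using hab na by simp
      let ?H1 = "rem ?h (a, b)"
      have c2: "card (orb ?H1 ` (?S - {(a, b)})) = card (orb ?h ` ?S)" using rem_nf[OF ph abS nh1] .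
      have pH1: "pon ?H1 (?S - {(a, b)})" using rem_pon[OF ph abS nh1] .
      have fba: "fst (\<rho> (b, a)) = b" using rs_fst[OF rs baD] by simp
      have H1ba: "?H1 (b, a) = \<rho> (b, a)" using hba fba ab(2) unfolding rem_def by auto
      have baS1: "(b, a) \<in> ?S - {(a, b)}" using baS neq by simp
      have nH1: "?H1 (b, a) \<noteq> (b, a)" using H1ba nb by simp
      let ?H2 = "rem ?H1 (b, a)"
      let ?S' = "?S - {(a, b)} - {(b, a)}"
      have c3: "card (orb ?H2 ` ?S') = card (orb ?H1 ` (?S - {(a, b)}))" using rem_nf[OF pH1 baS1 nH1] .
      have pH2: "pon ?H2 ?S'" using rem_pon[OF pH1 baS1 nH1] .
      have S'eq: "DC ?E' ?C = ?S'" unfolding DC_def darts_del by auto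
      have agree: "\<forall>d\<in>?S'. ?H2 d = ?f' d"
      proof
        fix d assume d: "d \<in> ?S'"
        have d1: "d \<noteq> (a, b)" "d \<noteq> (b, a)" using d by auto
        have r1: "(snd d, fst d) \<noteq> (a, b)" "(snd d, fst d) \<noteq> (b, a)" using d1 by (auto simp: prod_eq_iff)
        have "?H1 d = rem \<rho> (a, b) (snd d, fst d)"
          using hd[OF d1] hab unfolding rem_def by simp
        moreover have "?H1 (b, a) = rem \<rho> (a, b) (b, a)"
          using H1ba fba ab(2) unfolding rem_def by auto
        ultimately show "?H2 d = ?f' d" unfolding face_perm_def delr_def rem_def[of "?H1"]
          rem_def[of "rem \<rho> (a, b)" "(b, a)"] by simp
      qed
      have clH2: "?H2 ` ?S' \<subseteq> ?S'" using pH2 unfolding pon_def by simp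
      have oeq: "orb ?f' ` ?S' = orb ?H2 ` ?S'"
      proof (rule image_cong[OF refl])
        fix x assume "x \<in> ?S'"
        then show "orb ?f' x = orb ?H2 x" using orb_cong[of ?S' ?H2 ?f' x] agree clH2 by simp
      qed
      have fc: "card (orb ?f' ` DC ?E' ?C) + 1 = card (orb ?f ` ?S)"
        using c1 c2 c3 oeq S'eq by simp
      show ?thesis unfolding chi_def using fc ecard by simp
    next
      case False
      have bC: "b \<notin> ?C"
      proof
        assume "b \<in> ?C"
        then have "a \<in> ?C" using comp_step[OF sg, of b v a] ab(1) by (simp add: insert_commute)
        then show False using False by simp
      qed
      have edges: "{e\<in>?E'. e \<subseteq> ?C} = {e\<in>E. e \<subseteq> ?C}" using False by auto
      have Seq: "DC ?E' ?C = ?S" unfolding DC_def darts_del using False bC by auto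
      have agree: "\<forall>d\<in>?S. ?f d = ?f' d"
      proof
        fix d assume d: "d \<in> ?S"
        have dD: "d \<in> ?D" and dC: "fst d \<in> ?C" using d unfolding DC_def by auto
        have sC: "snd d \<in> ?C" using comp_step[OF sg dC dart_edge[OF dD]] .
        have rD: "(snd d, fst d) \<in> ?D" using dart_rev[OF dD] .
        have "fst (\<rho> (snd d, fst d)) = snd d" using rs_fst[OF rs rD] by simp
        then have n1: "\<rho> (snd d, fst d) \<noteq> (a, b)" "\<rho> (snd d, fst d) \<noteq> (b, a)"
          using sC False bC by auto
        show "?f d = ?f' d" using n1 unfolding face_perm_def delr_def rem_def by simp
      qed
      have cl: "?f ` ?S \<subseteq> ?S" using DC_closed[OF sg rs refl] .
      have oeq: "orb ?f' ` ?S = orb ?f ` ?S"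
      proof (rule image_cong[OF refl])
        fix x assume "x \<in> ?S"
        then show "orb ?f' x = orb ?f x" using orb_cong[of ?S ?f ?f' x] agree cl by simp
      qed
      show ?thesis unfolding chi_def cC edges Seq oeq by simp
    qed
  qed
  show ?thesis
    unfolding planar_chi[OF sg] planar_chi[OF sg'] comp using rs rs' chieq deg by auto
qed



lemma rs_cong:
  assumes rs: "rotation_system E \<rho>" and eq: "\<forall>d\<in>darts E. \<sigma> d = \<rho> d"
  shows "rotation_system E \<sigma>" and "faces E \<sigma> = faces E \<rho>"
proof -
  have cl: "\<rho> ` darts E \<subseteq> darts E" using rs_in[OF rs] by blast
  have oe: "orb \<rho> d = orb \<sigma> d" if "d \<in> darts E" for d
    using orb_cong[of "darts E" \<rho> \<sigma> d] eq cl that by simp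
  show "rotation_system E \<sigma>"
    unfolding rotation_system_def
  proof (intro conjI)
    show "bij_betw \<sigma> (darts E) (darts E)"
      using rs eq unfolding rotation_system_def using bij_betw_cong by fastforce
    show "\<forall>d\<in>darts E. fst (\<sigma> d) = fst d" using eq rs_fst[OF rs] by simp
    show "\<forall>d\<in>darts E. \<forall>d'\<in>darts E. fst d = fst d' \<longrightarrow> (\<exists>n. (\<sigma> ^^ n) d = d')"
    proof (intro ballI impI)
      fix d d' assume "d \<in> darts E" "d' \<in> darts E" "fst d = fst d'"
      then have "d' \<in> orb \<rho> d" using rs_trans[OF rs] by blast
      then have "d' \<in> orb \<sigma> d" using oe \<open>d \<in> darts E\<close> by simp
      then show "\<exists>n. (\<sigma> ^^ n) d = d'" unfolding orb_iff .
    qed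
  qed
  have feq: "\<forall>d\<in>darts E. face_perm \<sigma> d = face_perm \<rho> d"
    using eq dart_rev unfolding face_perm_def by blast
  have fcl: "face_perm \<rho> ` darts E \<subseteq> darts E" using fp_in[OF rs] by blast
  have "face_of \<sigma> d = face_of \<rho> d" if "d \<in> darts E" for d
    unfolding face_of_orb using orb_cong[of "darts E" "face_perm \<rho>" "face_perm \<sigma>" d] feq fcl that by simp
  then show "faces E \<sigma> = faces E \<rho>" unfolding faces_def by (intro image_cong) auto
qed

lemma planar_cong:
  assumes rs: "rotation_system E \<rho>" and eq: "\<forall>d\<in>darts E. \<sigma> d = \<rho> d"
  shows "planar_embedding V E \<sigma> \<longleftrightarrow> planar_embedding V E \<rho>"
  unfolding planar_embedding_def using rs_cong[OF assms] rs by simp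

lemma rot_insert:
  assumes sg1: "simple_graph V E1" and rs: "rotation_system (E1 - {{a, b}}) \<rho>"
    and ab: "{a, b} \<in> E1" "a \<noteq> b"
    and ps: "pon \<sigma> (darts E1)" and tails: "\<forall>d\<in>darts E1. fst (\<sigma> d) = fst d"
    and na: "\<sigma> (a, b) \<noteq> (a, b)" and nb: "\<sigma> (b, a) \<noteq> (b, a)"
    and agree: "\<forall>d\<in>darts (E1 - {{a, b}}). delr \<sigma> a b d = \<rho> d"
  shows "rotation_system E1 \<sigma>"
proof -
  let ?D1 = "darts E1" and ?D = "darts (E1 - {{a, b}})"
  let ?R1 = "rem \<sigma> (a, b)"
  have abD: "(a, b) \<in> ?D1" and baD: "(b, a) \<in> ?D1" using ab unfolding darts_def by (auto simp: insert_commute)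
  have p1: "pon ?R1 (?D1 - {(a, b)})" using rem_pon[OF ps abD na] .
  have fba: "fst (\<sigma> (b, a)) = b" using tails baD by simp
  have r1ba: "?R1 (b, a) = \<sigma> (b, a)" using fba ab(2) unfolding rem_def by auto
  have baD1: "(b, a) \<in> ?D1 - {(a, b)}" using baD ab(2) by simp
  have nb1: "?R1 (b, a) \<noteq> (b, a)" using r1ba nb by simp
  have p2: "pon (delr \<sigma> a b) (?D1 - {(a, b)} - {(b, a)})"
    unfolding delr_def using rem_pon[OF p1 baD1 nb1] .
  have dd: "?D1 - {(a, b)} - {(b, a)} = ?D" using darts_del by fastforce
  have orbs: "orb \<sigma> d - {(a, b), (b, a)} = orb \<rho> d" if "d \<in> ?D" for d
  proof -
    have d1: "d \<in> ?D1 - {(a, b)} - {(b, a)}" using that dd by simp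
    have "orb (delr \<sigma> a b) d = orb ?R1 d - {(b, a)}"
      unfolding delr_def using rem_orb[OF p1 baD1 nb1 d1] .
    also have "\<dots> = orb \<sigma> d - {(a, b)} - {(b, a)}"
      using rem_orb[OF ps abD na] d1 by simp
    finally have "orb (delr \<sigma> a b) d = orb \<sigma> d - {(a, b), (b, a)}" by auto
    moreover have "orb (delr \<sigma> a b) d = orb \<rho> d"
      using orb_cong[of ?D "delr \<sigma> a b" \<rho> d] agree p2 dd that unfolding pon_def by simp
    ultimately show ?thesis by simp
  qed
  have inD: "d \<in> ?D" if "d \<in> ?D1" "d \<noteq> (a, b)" "d \<noteq> (b, a)" for d
    using that dd by auto
  have good1: "\<exists>e\<in>?D. fst e = fst d \<and> e \<in> orb \<sigma> d" if "d \<in> ?D1" for d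
  proof (cases "d = (a, b) \<or> d = (b, a)")
    case False then show ?thesis using inD that by (intro bexI[of _ d]) auto
  next
    case True
    have sd: "\<sigma> d \<in> ?D1" using ps that unfolding pon_def by auto
    have fs: "fst (\<sigma> d) = fst d" using tails that by simp
    have "\<sigma> d \<noteq> (a, b)" "\<sigma> d \<noteq> (b, a)" using True na nb fs ab(2) by auto
    then show ?thesis using inD[OF sd] fs by (intro bexI[of _ "\<sigma> d"]) auto
  qed
  have bij: "bij_betw \<sigma> ?D1 ?D1" using pon_bij[OF ps] .
  have good2: "\<exists>e\<in>?D. fst e = fst d \<and> d \<in> orb \<sigma> e" if dD: "d \<in> ?D1" for d
  proof (cases "d = (a, b) \<or> d = (b, a)")
    case False then show ?thesis using inD that by (intro bexI[of _ d]) auto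
  next
    case True
    have "d \<in> \<sigma> ` ?D1" using bij dD unfolding bij_betw_def by simp
    then obtain e0 where e0: "e0 \<in> ?D1" "d = \<sigma> e0" by (rule imageE)
    obtain e where e: "e \<in> ?D1" "\<sigma> e = d" using e0 by simp
    have fs: "fst e = fst d" using tails e by auto
    have "e \<noteq> (a, b)" "e \<noteq> (b, a)" using True na nb fs e ab(2) by auto
    then show ?thesis using inD[OF e(1)] fs e(2) by (intro bexI[of _ e]) auto
  qed
  show ?thesis
    unfolding rotation_system_def
  proof (intro conjI)
    show "bij_betw \<sigma> ?D1 ?D1" using bij .
    show "\<forall>d\<in>?D1. fst (\<sigma> d) = fst d" using tails .
    show "\<forall>d\<in>?D1. \<forall>d'\<in>?D1. fst d = fst d' \<longrightarrow> (\<exists>n. (\<sigma> ^^ n) d = d')"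
    proof (intro ballI impI)
      fix d d' assume dd': "d \<in> ?D1" "d' \<in> ?D1" "fst d = fst d'"
      obtain e where e: "e \<in> ?D" "fst e = fst d" "e \<in> orb \<sigma> d" using good1[OF dd'(1)] by blast
      obtain e' where e': "e' \<in> ?D" "fst e' = fst d'" "d' \<in> orb \<sigma> e'" using good2[OF dd'(2)] by blast
      have "e' \<in> orb \<rho> e" using rs_trans[OF rs e(1) e'(1)] e(2) e'(2) dd'(3) by simp
      then have "e' \<in> orb \<sigma> e" using orbs[OF e(1)] by blast
      then have "d' \<in> orb \<sigma> e" using orb_trans[OF _ e'(3)] by blast
      then have "d' \<in> orb \<sigma> d" using orb_trans[OF e(3)] by blast
      then show "\<exists>n. (\<sigma> ^^ n) d = d'" unfolding orb_iff .
    qed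
  qed
qed

lemma orb3:
  assumes "f (f (f x)) = x"
  shows "orb f x = {x, f x, f (f x)}"
proof
  have p: "(f ^^ 3) x = x" using assms by (simp add: numeral_eq_Suc)
  show "orb f x \<subseteq> {x, f x, f (f x)}"
  proof
    fix y assume "y \<in> orb f x"
    then obtain n where n: "(f ^^ n) x = y" unfolding orb_iff by blast
    have "n = 3 * (n div 3) + n mod 3" by simp
    then have "(f ^^ n) x = (f ^^ (n mod 3)) ((f ^^ (3 * (n div 3))) x)"
      using funpow_add_app[where f=f and m="n mod 3" and n="3 * (n div 3)" and x=x] by (metis add.commute)
    also have "\<dots> = (f ^^ (n mod 3)) x" using funpow_period_mult[OF p] by simp
    finally have "y = (f ^^ (n mod 3)) x" using n by simp
    moreover have "n mod 3 < 3" by simp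
    then have "n mod 3 = 0 \<or> n mod 3 = Suc 0 \<or> n mod 3 = Suc (Suc 0)" by linarith
    ultimately show "y \<in> {x, f x, f (f x)}" by (elim disjE) simp_all
  qed
next
  show "{x, f x, f (f x)} \<subseteq> orb f x"
    using orb_self orb_f orb_step[OF orb_f] by auto
qed

lemma orb4:
  assumes "f (f (f (f x))) = x"
  shows "orb f x = {x, f x, f (f x), f (f (f x))}"
proof
  have p: "(f ^^ 4) x = x" using assms by (simp add: numeral_eq_Suc)
  show "orb f x \<subseteq> {x, f x, f (f x), f (f (f x))}"
  proof
    fix y assume "y \<in> orb f x"
    then obtain n where n: "(f ^^ n) x = y" unfolding orb_iff by blast
    have "n = 4 * (n div 4) + n mod 4" by simp
    then have "(f ^^ n) x = (f ^^ (n mod 4)) ((f ^^ (4 * (n div 4))) x)"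
      using funpow_add_app[where f=f and m="n mod 4" and n="4 * (n div 4)" and x=x] by (metis add.commute)
    also have "\<dots> = (f ^^ (n mod 4)) x" using funpow_period_mult[OF p] by simp
    finally have "y = (f ^^ (n mod 4)) x" using n by simp
    moreover have "n mod 4 < 4" by simp
    then have "n mod 4 = 0 \<or> n mod 4 = Suc 0 \<or> n mod 4 = Suc (Suc 0) \<or> n mod 4 = Suc (Suc (Suc 0))" by linarith
    ultimately show "y \<in> {x, f x, f (f x), f (f (f x))}" by (elim disjE) simp_all
  qed
next
  show "{x, f x, f (f x), f (f (f x))} \<subseteq> orb f x"
    using orb_self orb_f orb_step[OF orb_f] orb_step[OF orb_step[OF orb_f]] by auto
qed

lemma orb_card3:
  assumes p: "pon f S" and x: "x \<in> S" and c: "card (orb f x) = 3"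
  shows "f (f (f x)) = x \<and> x \<noteq> f x \<and> x \<noteq> f (f x) \<and> f x \<noteq> f (f x)"
proof -
  have inj: "inj_on f S" and cl: "f ` S \<subseteq> S" using p unfolding pon_def by auto
  have fx: "f x \<in> S" and ffx: "f (f x) \<in> S" using cl x by auto
  have e: "\<And>a b. a \<in> S \<Longrightarrow> b \<in> S \<Longrightarrow> f a = f b \<Longrightarrow> a = b" using inj by (meson inj_on_eq_iff)
  have sub4: "{x, f x, f (f x), f (f (f x))} \<subseteq> orb f x"
    using orb_self orb_f orb_step[OF orb_f] orb_step[OF orb_step[OF orb_f]] by auto
  have fin: "finite (orb f x)" using pon_orb_sub[OF p x] p unfolding pon_def by (meson finite_subset)
  have n1: "f x \<noteq> x"
  proof
    assume a: "f x = x"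
    have "f (f x) = x" using a by simp
    then have "orb f x = {x}" using orb3[of f x] a by simp
    then show False using c by simp
  qed
  have n2: "f (f x) \<noteq> x"
  proof
    assume a: "f (f x) = x"
    have "f (f (f x)) = f x" using a by simp
    then have "orb f x \<subseteq> {x, f x}"
    proof -
      have "f (f (f (f x))) = x" using a by simp
      then have "orb f x = {x, f x, f (f x), f (f (f x))}" using orb4 by metis
      then show ?thesis using a by auto
    qed
    then have "card (orb f x) \<le> card {x, f x}" by (rule card_mono[rotated]) simp
    moreover have "card {x, f x} \<le> 2" by (cases "x = f x") simp_all
    ultimately have "card (orb f x) \<le> 2" by simp
    then show False using c by simp
  qed
  have n3: "f x \<noteq> f (f x)"
  proof
    assume "f x = f (f x)"
    then have "x = f x" using e[OF x fx] by simp
    then show False using n1 by simp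
  qed
  have n4: "f (f (f x)) = x"
  proof (rule ccontr)
    assume a: "f (f (f x)) \<noteq> x"
    have "f (f (f x)) \<noteq> f x"
    proof
      assume "f (f (f x)) = f x"
      then have "f (f x) = x" using e[OF ffx x] by simp
      then show False using n2 by simp
    qed
    moreover have "f (f (f x)) \<noteq> f (f x)"
    proof
      assume "f (f (f x)) = f (f x)"
      then have "f (f x) = f x" using e[OF ffx fx] by simp
      then show False using n3 by simp
    qed
    ultimately have "card {x, f x, f (f x), f (f (f x))} = 4" using a n1 n2 n3 by auto
    then have "4 \<le> card (orb f x)" using card_mono[OF fin sub4] by simp
    then show False using c by simp
  qed
  show ?thesis using n1 n2 n3 n4 by auto
qed



lemma orb_conj:
  assumes "\<forall>d\<in>A. g (F d) = F (h d)" "h ` A \<subseteq> A" "d \<in> A"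
  shows "orb g (F d) = F ` orb h d"
proof -
  have it: "(g ^^ n) (F d) = F ((h ^^ n) d)" for n
  proof (induction n)
    case 0 then show ?case by simp
  next
    case (Suc n)
    have "(h ^^ n) d \<in> A" using funpow_closed[OF assms(2,3)] .
    then show ?case using Suc assms(1) by simp
  qed
  show ?thesis unfolding orb_def using it by auto
qed

lemma transport:
  fixes V :: "'a set" and E :: "'a set set"
  assumes sg: "simple_graph V E" and pl: "planar V E" and md: "max_degree_le V E 4"
  shows "\<exists>(V'' :: nat set) E''. simple_graph V'' E'' \<and> planar V'' E'' \<and> max_degree_le V'' E'' 4
     \<and> card V'' = card V \<and> card E'' = card E
     \<and> (\<forall>k c''. dist2_coloring V'' E'' k c'' \<longrightarrow> (\<exists>c. dist2_coloring V E k c))"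
proof -
  have finV: "finite V" using sg unfolding simple_graph_def by simp
  obtain f :: "'a \<Rightarrow> nat" where "bij_betw f V {0..<card V}" using ex_bij_betw_finite_nat[OF finV] by blast
  then have inj: "inj_on f V" unfolding bij_betw_def by simp
  define V'' where "V'' = f ` V"
  define E'' where "E'' = (\<lambda>e. f ` e) ` E"
  have esub: "\<And>e. e \<in> E \<Longrightarrow> e \<subseteq> V" using sg unfolding simple_graph_def by auto
  have finE: "finite E" using sg_finE[OF sg] .
  have edge_iff: "{f a, f b} \<in> E'' \<longleftrightarrow> {a, b} \<in> E" if "a \<in> V" "b \<in> V" for a b
  proof
    assume "{a, b} \<in> E" then show "{f a, f b} \<in> E''" unfolding E''_def by (metis image_empty image_insert image_eqI)
  next
    assume "{f a, f b} \<in> E''"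
    then obtain e where e: "e \<in> E" "{f a, f b} = f ` e" unfolding E''_def by blast
    then have fe: "f ` {a, b} = f ` e" by simp
    have "{a, b} \<subseteq> V" "e \<subseteq> V" using that esub[OF e(1)] by auto
    then have "{a, b} = e" using inj_on_image_eq_iff[OF inj, of "{a, b}" e] fe by blast
    then show "{a, b} \<in> E" using e by simp
  qed
  have edge_in: "p \<in> V'' \<and> q \<in> V''" if "{p, q} \<in> E''" for p q
    using that esub unfolding E''_def V''_def by blast
  have sgE: "\<forall>e''\<in>E''. e'' \<subseteq> V'' \<and> card e'' = 2"
  proof
    fix e'' assume "e'' \<in> E''"
    then obtain e where e: "e \<in> E" "e'' = f ` e" unfolding E''_def by blast
    have "card e = 2" using sg e(1) unfolding simple_graph_def by simp
    moreover have "inj_on f e" using inj esub[OF e(1)] by (rule inj_on_subset)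
    ultimately show "e'' \<subseteq> V'' \<and> card e'' = 2" using e esub[OF e(1)] card_image unfolding V''_def by fastforce
  qed
  have sg'': "simple_graph V'' E''"
    unfolding simple_graph_def using sgE finV unfolding V''_def by simp
  have nb: "{z. {z, f y} \<in> E''} = f ` {z. {z, y} \<in> E}" if "y \<in> V" for y
  proof
    show "{z. {z, f y} \<in> E''} \<subseteq> f ` {z. {z, y} \<in> E}"
    proof
      fix z assume "z \<in> {z. {z, f y} \<in> E''}"
      then have z: "{z, f y} \<in> E''" by simp
      then obtain z0 where z0: "z0 \<in> V" "z = f z0" using edge_in unfolding V''_def by blast
      then have "{z0, y} \<in> E" using edge_iff[OF z0(1) that] z by simp
      then show "z \<in> f ` {z. {z, y} \<in> E}" using z0 by blast
    qed
  next
    show "f ` {z. {z, y} \<in> E} \<subseteq> {z. {z, f y} \<in> E''}"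
    proof
      fix z assume "z \<in> f ` {z. {z, y} \<in> E}"
      then obtain z0 where z0: "{z0, y} \<in> E" "z = f z0" by blast
      have "z0 \<in> V" using sg_edge_sub[OF sg z0(1)] by simp
      then show "z \<in> {z. {z, f y} \<in> E''}" using edge_iff[OF _ that] z0 by simp
    qed
  qed
  have deg: "degree E'' (f y) = degree E y" if "y \<in> V" for y
  proof -
    have "{z. {z, y} \<in> E} \<subseteq> V" using sg_edge_sub[OF sg] by auto
    then have "inj_on f {z. {z, y} \<in> E}" using inj by (rule inj_on_subset[rotated])
    then show ?thesis unfolding degree_def nb[OF that] by (simp add: card_image)
  qed
  have md'': "max_degree_le V'' E'' 4"
    using md deg unfolding max_degree_le_def V''_def by auto
  have cV: "card V'' = card V" unfolding V''_def using card_image[OF inj] .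
  have injE: "inj_on (\<lambda>e. f ` e) E"
  proof -
    have "inj_on (\<lambda>e. f ` e) (Pow V)" using inj_on_image_Pow[OF inj] .
    moreover have "E \<subseteq> Pow V" using esub by auto
    ultimately show ?thesis by (rule inj_on_subset)
  qed
  have cE: "card E'' = card E" unfolding E''_def using card_image[OF injE] .
  have col: "\<forall>k c''. dist2_coloring V'' E'' k c'' \<longrightarrow> (\<exists>c. dist2_coloring V E k c)"
  proof (intro allI impI)
    fix k c'' assume c: "dist2_coloring V'' E'' k c''"
    have "dist2_coloring V E k (c'' \<circ> f)"
      unfolding dist2_coloring_def
    proof (intro conjI ballI impI)
      fix y assume "y \<in> V" then show "(c'' \<circ> f) y < k" using c unfolding dist2_coloring_def V''_def by auto
    next
      fix y z assume yz: "y \<in> V" "z \<in> V" "y \<noteq> z \<and> (adj E y z \<or> (\<exists>w. adj E y w \<and> adj E w z))"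
      have fyz: "f y \<noteq> f z" using yz inj by (meson inj_on_eq_iff)
      have "adj E'' (f y) (f z) \<or> (\<exists>w. adj E'' (f y) w \<and> adj E'' w (f z))"
      proof (cases "adj E y z")
        case True then show ?thesis using edge_iff[OF yz(1,2)] unfolding adj_def by simp
      next
        case False
        then obtain w where w: "adj E y w" "adj E w z" using yz by blast
        have wV: "w \<in> V" using sg_edge_sub[OF sg] w(1) unfolding adj_def by blast
        have "adj E'' (f y) (f w)" "adj E'' (f w) (f z)"
          using edge_iff[OF yz(1) wV] edge_iff[OF wV yz(2)] w unfolding adj_def by auto
        then show ?thesis by blast
      qed
      then show "(c'' \<circ> f) y \<noteq> (c'' \<circ> f) z"
        using c fyz yz(1,2) unfolding dist2_coloring_def V''_def by auto
    qed
    then show "\<exists>c. dist2_coloring V E k c" by blast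
  qed
  obtain \<rho> where pe: "planar_embedding V E \<rho>" using pl unfolding planar_def by blast
  have rs: "rotation_system E \<rho>" using pe unfolding planar_embedding_def by simp
  define F where "F = map_prod f f"
  let ?D = "darts E"
  have Dsub: "?D \<subseteq> V \<times> V" using sg_edge_sub[OF sg] unfolding darts_def by auto
  have injF: "inj_on F ?D"
  proof (rule inj_onI)
    fix x y assume xy: "x \<in> ?D" "y \<in> ?D" "F x = F y"
    then have "f (fst x) = f (fst y)" "f (snd x) = f (snd y)" unfolding F_def by (auto simp: map_prod_def split: prod.splits)
    moreover have "fst x \<in> V" "fst y \<in> V" "snd x \<in> V" "snd y \<in> V" using xy Dsub by auto
    ultimately show "x = y" using inj by (meson inj_on_eq_iff prod_eqI)
  qed
  have D'': "darts E'' = F ` ?D"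
  proof
    show "darts E'' \<subseteq> F ` ?D"
    proof
      fix p assume p: "p \<in> darts E''"
      obtain p1 p2 where pp: "p = (p1, p2)" by (cases p)
      have e: "{p1, p2} \<in> E''" "p1 \<noteq> p2" using p pp unfolding darts_def by auto
      obtain a b where ab: "a \<in> V" "b \<in> V" "p1 = f a" "p2 = f b" using edge_in[OF e(1)] unfolding V''_def by blast
      have "{a, b} \<in> E" "a \<noteq> b" using edge_iff[OF ab(1,2)] e ab by auto
      then have "(a, b) \<in> ?D" unfolding darts_def by simp
      then show "p \<in> F ` ?D" using pp ab unfolding F_def by force
    qed
  next
    show "F ` ?D \<subseteq> darts E''"
    proof
      fix p assume "p \<in> F ` ?D"
      then obtain a b where ab: "(a, b) \<in> ?D" "p = (f a, f b)" unfolding F_def by auto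
      have "a \<in> V" "b \<in> V" using ab Dsub by auto
      then show "p \<in> darts E''" using ab edge_iff inj unfolding darts_def by (auto simp: inj_on_eq_iff)
    qed
  qed
  define \<rho>'' where "\<rho>'' = (\<lambda>p. F (\<rho> (inv_into ?D F p)))"
  have rF: "\<rho>'' (F d) = F (\<rho> d)" if "d \<in> ?D" for d
    unfolding \<rho>''_def using inv_into_f_f[OF injF that] by simp
  have fstF: "fst (F d) = f (fst d)" for d unfolding F_def by (simp add: map_prod_def split: prod.splits)
  have sndF: "snd (F d) = f (snd d)" for d unfolding F_def by (simp add: map_prod_def split: prod.splits)
  have revF: "(snd (F d), fst (F d)) = F (snd d, fst d)" for d unfolding F_def by (simp add: map_prod_def split: prod.splits)
  have bF: "bij_betw F ?D (darts E'')" unfolding bij_betw_def using injF D'' by simp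
  have rs'': "rotation_system E'' \<rho>''"
    unfolding rotation_system_def
  proof (intro conjI)
    have "bij_betw (inv_into ?D F) (darts E'') ?D" using bij_betw_inv_into[OF bF] .
    moreover have "bij_betw \<rho> ?D ?D" using rs unfolding rotation_system_def by simp
    ultimately have "bij_betw (\<rho> \<circ> inv_into ?D F) (darts E'') ?D" by (rule bij_betw_trans)
    then have "bij_betw (F \<circ> (\<rho> \<circ> inv_into ?D F)) (darts E'') (darts E'')" using bF by (rule bij_betw_trans)
    then show "bij_betw \<rho>'' (darts E'') (darts E'')" unfolding \<rho>''_def comp_def .
  next
    show "\<forall>d\<in>darts E''. fst (\<rho>'' d) = fst d"
    proof
      fix p assume "p \<in> darts E''"
      then obtain d where d: "d \<in> ?D" "p = F d" using D'' by blast
      show "fst (\<rho>'' p) = fst p" using d rF[OF d(1)] fstF rs_fst[OF rs d(1)] by simp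
    qed
  next
    show "\<forall>d\<in>darts E''. \<forall>d'\<in>darts E''. fst d = fst d' \<longrightarrow> (\<exists>n. (\<rho>'' ^^ n) d = d')"
    proof (intro ballI impI)
      fix p p' assume pp: "p \<in> darts E''" "p' \<in> darts E''" "fst p = fst p'"
      obtain d d' where d: "d \<in> ?D" "p = F d" "d' \<in> ?D" "p' = F d'" using pp(1,2) D'' by blast
      have "f (fst d) = f (fst d')" using pp(3) d fstF by simp
      moreover have "fst d \<in> V" "fst d' \<in> V" using d Dsub by auto
      ultimately have "fst d = fst d'" using inj by (meson inj_on_eq_iff)
      then have "d' \<in> orb \<rho> d" using rs_trans[OF rs d(1,3)] by simp
      moreover have "orb \<rho>'' (F d) = F ` orb \<rho> d"
        using orb_conj[of ?D \<rho>'' F \<rho> d] rF rs_in[OF rs] d(1) by blast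
      ultimately have "p' \<in> orb \<rho>'' p" using d by simp
      then show "\<exists>n. (\<rho>'' ^^ n) p = p'" unfolding orb_iff .
    qed
  qed
  have fpF: "face_perm \<rho>'' (F d) = F (face_perm \<rho> d)" if "d \<in> ?D" for d
    unfolding face_perm_def revF using rF[OF dart_rev[OF that]] by simp
  have cl: "face_perm \<rho> ` ?D \<subseteq> ?D" using fp_in[OF rs] by blast
  have orbF: "orb (face_perm \<rho>'') (F d) = F ` orb (face_perm \<rho>) d" if "d \<in> ?D" for d
    using orb_conj[of ?D "face_perm \<rho>''" F "face_perm \<rho>" d] fpF cl that by blast
  have R: "(f y, z'') \<in> {(x, y). adj E'' x y}\<^sup>* \<Longrightarrow> \<exists>z. z'' = f z \<and> z \<in> V \<and> (y, z) \<in> {(x, y). adj E x y}\<^sup>*"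
    if "y \<in> V" for y z''
  proof (induction rule: rtrancl_induct)
    case base then show ?case using that by blast
  next
    case (step p q)
    then obtain z where z: "p = f z" "z \<in> V" "(y, z) \<in> {(x, y). adj E x y}\<^sup>*" by blast
    have e: "{f z, q} \<in> E''" using step(2) z unfolding adj_def by simp
    then obtain t where t: "t \<in> V" "q = f t" using edge_in[OF e] unfolding V''_def by blast
    then have "{z, t} \<in> E" using edge_iff[OF z(2) t(1)] e by simp
    then have "(y, t) \<in> {(x, y). adj E x y}\<^sup>*" using z(3) unfolding adj_def
      by (simp add: rtrancl.rtrancl_into_rtrancl)
    then show ?case using t by blast
  qed
  have R2: "(y, z) \<in> {(x, y). adj E x y}\<^sup>* \<Longrightarrow> (f y, f z) \<in> {(x, y). adj E'' x y}\<^sup>*"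
    if "y \<in> V" for y z
  proof (induction rule: rtrancl_induct)
    case base then show ?case by simp
  next
    case (step p q)
    have e: "{p, q} \<in> E" using step(2) unfolding adj_def by simp
    have "p \<in> V" "q \<in> V" using sg_edge_sub[OF sg e] by auto
    then have "{f p, f q} \<in> E''" using edge_iff e by simp
    then show ?case using step(3) unfolding adj_def by (simp add: rtrancl.rtrancl_into_rtrancl)
  qed
  have compF: "component V'' E'' (f y) = f ` component V E y" if yV: "y \<in> V" for y
  proof
    show "component V'' E'' (f y) \<subseteq> f ` component V E y"
    proof
      fix z'' assume "z'' \<in> component V'' E'' (f y)"
      then have "(f y, z'') \<in> {(x, y). adj E'' x y}\<^sup>*" unfolding component_def by simp
      then obtain z where "z'' = f z" "z \<in> V" "(y, z) \<in> {(x, y). adj E x y}\<^sup>*" using R[OF yV] by blast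
      then show "z'' \<in> f ` component V E y" unfolding component_def by blast
    qed
  next
    show "f ` component V E y \<subseteq> component V'' E'' (f y)"
    proof
      fix z'' assume "z'' \<in> f ` component V E y"
      then obtain z where z: "z'' = f z" "z \<in> V" "(y, z) \<in> {(x, y). adj E x y}\<^sup>*" unfolding component_def by blast
      then show "z'' \<in> component V'' E'' (f y)" using R2[OF yV z(3)] unfolding component_def V''_def by blast
    qed
  qed
  have chiF: "chi E'' \<rho>'' (f ` C) = chi E \<rho> C" if "C = component V E y" "y \<in> V" for C y
  proof -
    have CV: "C \<subseteq> V" using that unfolding component_def by auto
    have c1: "card (f ` C) = card C" using card_image inj_on_subset[OF inj CV] by blast
    have ed: "{e\<in>E''. e \<subseteq> f ` C} = (\<lambda>e. f ` e) ` {e\<in>E. e \<subseteq> C}"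
    proof
      show "{e\<in>E''. e \<subseteq> f ` C} \<subseteq> (\<lambda>e. f ` e) ` {e\<in>E. e \<subseteq> C}"
      proof
        fix e'' assume e'': "e'' \<in> {e\<in>E''. e \<subseteq> f ` C}"
        then obtain e where e: "e \<in> E" "e'' = f ` e" unfolding E''_def by blast
        have "e \<subseteq> C"
        proof
          fix x assume "x \<in> e"
          then have "f x \<in> f ` C" using e e'' by auto
          moreover have "x \<in> V" using esub[OF e(1)] \<open>x \<in> e\<close> by auto
          ultimately show "x \<in> C" using inj CV by (auto simp: inj_on_image_mem_iff)
        qed
        then show "e'' \<in> (\<lambda>e. f ` e) ` {e\<in>E. e \<subseteq> C}" using e by blast
      qed
    next
      show "(\<lambda>e. f ` e) ` {e\<in>E. e \<subseteq> C} \<subseteq> {e\<in>E''. e \<subseteq> f ` C}" unfolding E''_def by auto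
    qed
    have c2: "card {e\<in>E''. e \<subseteq> f ` C} = card {e\<in>E. e \<subseteq> C}"
      unfolding ed using card_image inj_on_subset[OF injE] by (metis (no_types, lifting) mem_Collect_eq subsetI)
    have dc: "DC E'' (f ` C) = F ` DC E C"
    proof
      show "DC E'' (f ` C) \<subseteq> F ` DC E C"
      proof
        fix p assume p: "p \<in> DC E'' (f ` C)"
        then obtain d where d: "d \<in> ?D" "p = F d" unfolding DC_def using D'' by blast
        have "f (fst d) \<in> f ` C" using p d fstF unfolding DC_def by simp
        moreover have "fst d \<in> V" using d Dsub by auto
        ultimately have "fst d \<in> C" using inj CV by (auto simp: inj_on_image_mem_iff)
        then show "p \<in> F ` DC E C" using d unfolding DC_def by blast
      qed
    next
      show "F ` DC E C \<subseteq> DC E'' (f ` C)" unfolding DC_def using D'' fstF by auto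
    qed
    have oi: "orb (face_perm \<rho>'') ` DC E'' (f ` C) = (\<lambda>X. F ` X) ` (orb (face_perm \<rho>) ` DC E C)"
    proof -
      have "orb (face_perm \<rho>'') ` DC E'' (f ` C) = (\<lambda>d. orb (face_perm \<rho>'') (F d)) ` DC E C"
        unfolding dc by (simp add: image_image)
      also have "\<dots> = (\<lambda>d. F ` orb (face_perm \<rho>) d) ` DC E C"
        using orbF unfolding DC_def by (intro image_cong) auto
      also have "\<dots> = (\<lambda>X. F ` X) ` (orb (face_perm \<rho>) ` DC E C)" by (simp add: image_image)
      finally show ?thesis .
    qed
    have ip: "inj_on (\<lambda>X. F ` X) (Pow ?D)" using inj_on_image_Pow[OF injF] .
    have sub: "orb (face_perm \<rho>) ` DC E C \<subseteq> Pow ?D"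
    proof
      fix X assume "X \<in> orb (face_perm \<rho>) ` DC E C"
      then obtain d where d: "d \<in> DC E C" "X = orb (face_perm \<rho>) d" by blast
      have "d \<in> ?D" using d(1) unfolding DC_def by simp
      then have "X \<subseteq> ?D" using orb_closed[OF cl, of d] d(2) by simp
      then show "X \<in> Pow ?D" by simp
    qed
    have c3: "card (orb (face_perm \<rho>'') ` DC E'' (f ` C)) = card (orb (face_perm \<rho>) ` DC E C)"
      unfolding oi using card_image[OF inj_on_subset[OF ip sub]] .
    show ?thesis unfolding chi_def c1 c2 c3 ..
  qed
  have pe'': "planar_embedding V'' E'' \<rho>''"
    unfolding planar_chi[OF sg'']
  proof (intro conjI ballI impI)
    show "rotation_system E'' \<rho>''" using rs'' .
  next
    fix y'' assume y'': "y'' \<in> V''" "0 < degree E'' y''"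
    then obtain y where y: "y \<in> V" "y'' = f y" unfolding V''_def by blast
    have "0 < degree E y" using y'' y deg by simp
    then have "chi E \<rho> (component V E y) = 2" using pe y(1) unfolding planar_chi[OF sg] by blast
    then show "chi E'' \<rho>'' (component V'' E'' y'') = 2"
      using chiF[OF refl y(1)] compF[OF y(1)] y(2) by simp
  qed
  show ?thesis
    using sg'' md'' cV cE col pe'' unfolding planar_def by blast
qed



definition ins_after :: "('b \<Rightarrow> 'b) \<Rightarrow> 'b \<Rightarrow> 'b \<Rightarrow> 'b \<Rightarrow> 'b" where
  "ins_after f p q = (\<lambda>d. if d = p then q else if d = q then f p else f d)"

definition ins_before :: "('b \<Rightarrow> 'b) \<Rightarrow> 'b \<Rightarrow> 'b \<Rightarrow> 'b \<Rightarrow> 'b" where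
  "ins_before f r q = (\<lambda>d. if d = q then r else if f d = r then q else f d)"

lemma ins_after_pon:
  assumes p: "pon f S" and pS: "p \<in> S" and qS: "q \<notin> S"
  shows "pon (ins_after f p q) (insert q S)"
proof -
  have fin: "finite S" and inj: "inj_on f S" and cl: "f ` S \<subseteq> S" using p unfolding pon_def by auto
  have e: "\<And>a b. a \<in> S \<Longrightarrow> b \<in> S \<Longrightarrow> f a = f b \<Longrightarrow> a = b" using inj by (meson inj_on_eq_iff)
  have m: "ins_after f p q ` insert q S \<subseteq> insert q S"
  proof
    fix y assume "y \<in> ins_after f p q ` insert q S"
    then obtain d where d: "d \<in> insert q S" "y = ins_after f p q d" by blast
    have "f p \<in> S" using subsetD[OF cl imageI[OF pS]] .
    moreover have "d \<in> S \<Longrightarrow> f d \<in> S" using subsetD[OF cl imageI] by blast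
    ultimately show "y \<in> insert q S" using d unfolding ins_after_def by auto
  qed
  have "inj_on (ins_after f p q) (insert q S)"
  proof (rule inj_onI)
    fix a b assume ab: "a \<in> insert q S" "b \<in> insert q S" "ins_after f p q a = ins_after f p q b"
    have fS: "\<And>c. c \<in> S \<Longrightarrow> f c \<in> S" using subsetD[OF cl imageI] by blast
    let ?g = "ins_after f p q"
    have gp: "?g p = q" unfolding ins_after_def by simp
    have gq: "?g q = f p" using pS qS unfolding ins_after_def by auto
    have go: "?g d = f d" if "d \<noteq> p" "d \<noteq> q" for d using that unfolding ins_after_def by simp
    have fpS: "f p \<in> S" using fS[OF pS] .
    show "a = b"
    proof (cases "a = p \<or> a = q \<or> b = p \<or> b = q")
      case False
      then have "f a = f b" using ab(3) go[of a] go[of b] by simp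
      moreover have "a \<in> S" "b \<in> S" using ab(1,2) False by auto
      ultimately show ?thesis using e by blast
    next
      case True
      have nq: "\<And>d. d \<in> S \<Longrightarrow> f d \<noteq> q" using fS qS by blast
      have c1: "a \<noteq> p \<Longrightarrow> a \<noteq> q \<Longrightarrow> a \<in> S" using ab(1) by auto
      have c2: "b \<noteq> p \<Longrightarrow> b \<noteq> q \<Longrightarrow> b \<in> S" using ab(1,2) by auto
      show ?thesis
      proof (cases "a = p")
        case ap: True
        show ?thesis
        proof (cases "b = p")
          case True then show ?thesis using ap by simp
        next
          case bp: False
          show ?thesis
          proof (cases "b = q")
            case True then show ?thesis using ab(3) ap gp gq nq[OF pS] by simp
          next
            case False then show ?thesis using ab(3) ap gp go[OF bp False] nq[OF c2[OF bp False]] by simp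
          qed
        qed
      next
        case anp: False
        show ?thesis
        proof (cases "a = q")
          case aq: True
          show ?thesis
          proof (cases "b = p")
            case True then show ?thesis using ab(3) aq gp gq nq[OF pS] by simp
          next
            case bp: False
            show ?thesis
            proof (cases "b = q")
              case True then show ?thesis using aq by simp
            next
              case False
              have "f p = f b" using ab(3) aq gq go[OF bp False] by simp
              then have "p = b" using e[OF pS c2[OF bp False]] by simp
              then show ?thesis using bp by simp
            qed
          qed
        next
          case anq: False
          have aS: "a \<in> S" using c1[OF anp anq] .
          show ?thesis
          proof (cases "b = p")
            case True then show ?thesis using ab(3) go[OF anp anq] gp nq[OF aS] by simp
          next
            case bp: False
            show ?thesis
            proof (cases "b = q")
              case True
              have "f a = f p" using ab(3) True go[OF anp anq] gq by simp
              then have "a = p" using e[OF aS pS] by simp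
              then show ?thesis using anp by simp
            next
              case False
              then show ?thesis using True anp anq bp by simp
            qed
          qed
        qed
      qed
    qed
  qed
  then show ?thesis using m fin unfolding pon_def by simp
qed

lemma ins_before_pon:
  assumes p: "pon f S" and rS: "r \<in> S" and qS: "q \<notin> S"
  shows "pon (ins_before f r q) (insert q S)"
proof -
  have fin: "finite S" and inj: "inj_on f S" and cl: "f ` S \<subseteq> S" using p unfolding pon_def by auto
  have e: "\<And>a b. a \<in> S \<Longrightarrow> b \<in> S \<Longrightarrow> f a = f b \<Longrightarrow> a = b" using inj by (meson inj_on_eq_iff)
  have fS: "\<And>c. c \<in> S \<Longrightarrow> f c \<in> S" using subsetD[OF cl imageI] by blast
  have m: "ins_before f r q ` insert q S \<subseteq> insert q S"
  proof
    fix y assume "y \<in> ins_before f r q ` insert q S"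
    then obtain d where d: "d \<in> insert q S" "y = ins_before f r q d" by blast
    have "d \<in> S \<Longrightarrow> f d \<in> S" using subsetD[OF cl imageI] by blast
    then show "y \<in> insert q S" using d rS unfolding ins_before_def by auto
  qed
  have "inj_on (ins_before f r q) (insert q S)"
  proof (rule inj_onI)
    fix a b assume ab: "a \<in> insert q S" "b \<in> insert q S" "ins_before f r q a = ins_before f r q b"
    let ?g = "ins_before f r q"
    have gq: "?g q = r" unfolding ins_before_def by simp
    have g1: "?g d = q" if "d \<noteq> q" "f d = r" for d using that unfolding ins_before_def by simp
    have g2: "?g d = f d" if "d \<noteq> q" "f d \<noteq> r" for d using that unfolding ins_before_def by simp
    have rq: "r \<noteq> q" using rS qS by auto
    have nq: "\<And>d. d \<in> S \<Longrightarrow> f d \<noteq> q" using fS qS by blast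
    show "a = b"
    proof (cases "a = q")
      case aq: True
      show ?thesis
      proof (cases "b = q")
        case True then show ?thesis using aq by simp
      next
        case bq: False
        have bS: "b \<in> S" using ab(2) bq by simp
        show ?thesis
        proof (cases "f b = r")
          case True then show ?thesis using ab(3) aq gq g1[OF bq True] rq by simp
        next
          case False then show ?thesis using ab(3) aq gq g2[OF bq False] by simp
        qed
      qed
    next
      case aq: False
      have aS: "a \<in> S" using ab(1) aq by simp
      show ?thesis
      proof (cases "b = q")
        case bq: True
        show ?thesis
        proof (cases "f a = r")
          case True then show ?thesis using ab(3) bq gq g1[OF aq True] rq by simp
        next
          case False then show ?thesis using ab(3) bq gq g2[OF aq False] by simp
        qed
      next
        case bq: False
        have bS: "b \<in> S" using ab(2) bq by simp
        show ?thesis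
        proof (cases "f a = r"; cases "f b = r")
          assume "f a = r" "f b = r" then show ?thesis using e[OF aS bS] by simp
        next
          assume "f a = r" "f b \<noteq> r" then show ?thesis using ab(3) g1[OF aq] g2[OF bq] nq[OF bS] by simp
        next
          assume "f a \<noteq> r" "f b = r" then show ?thesis using ab(3) g1[OF bq] g2[OF aq] nq[OF aS] by simp
        next
          assume "f a \<noteq> r" "f b \<noteq> r" then show ?thesis using ab(3) g2[OF aq] g2[OF bq] e[OF aS bS] by simp
        qed
      qed
    qed
  qed
  then show ?thesis using m fin unfolding pon_def by simp
qed

definition conf :: "'a set set \<Rightarrow> 'a \<Rightarrow> 'a \<Rightarrow> bool" where
  "conf E y z \<longleftrightarrow> adj E y z \<or> (\<exists>t. adj E y t \<and> adj E t z)"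

lemma conf_sym: "conf E y z \<Longrightarrow> conf E z y"
  unfolding conf_def adj_def by (auto simp: insert_commute)

lemma chi2_le: "dist2_coloring V E k c \<Longrightarrow> chi2 V E \<le> k"
  unfolding chi2_def by (rule Least_le) blast

lemma chi2_col:
  assumes "finite V"
  shows "\<exists>c. dist2_coloring V E (chi2 V E) c"
proof -
  obtain g :: "'a \<Rightarrow> nat" where g: "bij_betw g V {0..<card V}" using ex_bij_betw_finite_nat[OF assms] by blast
  have "dist2_coloring V E (card V) g"
    unfolding dist2_coloring_def using g unfolding bij_betw_def
    by (auto simp: inj_on_eq_iff)
  then have "\<exists>k c. dist2_coloring V E k c" by blast
  then show ?thesis unfolding chi2_def by (rule LeastI_ex)
qed

lemma col_mono: "dist2_coloring V E k c \<Longrightarrow> k \<le> k' \<Longrightarrow> dist2_coloring V E k' c"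
  unfolding dist2_coloring_def by fastforce

lemma extend:
  assumes sg: "simple_graph V E" and col: "dist2_coloring V E' k c'" and v: "v \<in> V"
    and pres: "\<forall>y\<in>V. \<forall>z\<in>V. y \<noteq> v \<longrightarrow> z \<noteq> v \<longrightarrow> y \<noteq> z \<longrightarrow> conf E y z \<longrightarrow> conf E' y z"
    and small: "card {z. z \<noteq> v \<and> conf E v z} < k"
  shows "\<exists>c. dist2_coloring V E k c"
proof -
  let ?N = "{z. z \<noteq> v \<and> conf E v z}"
  have NV: "?N \<subseteq> V"
  proof
    fix z assume "z \<in> ?N"
    then have "conf E v z" by simp
    then obtain t where "{v, z} \<in> E \<or> {t, z} \<in> E" unfolding conf_def adj_def by blast
    then show "z \<in> V" using sg_edge_sub[OF sg] by blast
  qed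
  have finN: "finite ?N" using NV sg unfolding simple_graph_def by (meson finite_subset)
  have "card (c' ` ?N) \<le> card ?N" using card_image_le[OF finN] .
  then have "card (c' ` ?N) < card {0..<k}" using small by simp
  then have "\<not> {0..<k} \<subseteq> c' ` ?N"
  proof -
    assume lt: "card (c' ` ?N) < card {0..<k}"
    show ?thesis
    proof
      assume "{0..<k} \<subseteq> c' ` ?N"
      then have "card {0..<k} \<le> card (c' ` ?N)" using card_mono[OF finite_imageI[OF finN]] by blast
      then show False using lt by simp
    qed
  qed
  then obtain col where col0: "col \<in> {0..<k}" "col \<notin> c' ` ?N" by (meson subsetI)
  then have colk: "col < k" "col \<notin> c' ` ?N" by auto
  let ?c = "c'(v := col)"
  have "dist2_coloring V E k ?c"
    unfolding dist2_coloring_def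
  proof (intro conjI ballI impI)
    fix y assume "y \<in> V" then show "?c y < k" using col colk unfolding dist2_coloring_def by auto
  next
    fix y z assume yz: "y \<in> V" "z \<in> V" "y \<noteq> z \<and> (adj E y z \<or> (\<exists>w. adj E y w \<and> adj E w z))"
    have cf: "conf E y z" using yz unfolding conf_def by simp
    show "?c y \<noteq> ?c z"
    proof (cases "y = v")
      case True
      then have "z \<in> ?N" using cf yz by auto
      then show ?thesis using True yz colk by auto
    next
      case yv: False
      show ?thesis
      proof (cases "z = v")
        case True
        then have "y \<in> ?N" using conf_sym[OF cf] yz by auto
        then show ?thesis using True yv colk by auto
      next
        case False
        then have "conf E' y z" using pres yz yv cf by blast
        then show ?thesis using col yz yv False unfolding dist2_coloring_def conf_def by auto
      qed
    qed
  qed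
  then show ?thesis by blast
qed

lemma nb_fin: "simple_graph V E \<Longrightarrow> finite {z. {z, y} \<in> E}"
proof -
  assume sg: "simple_graph V E"
  have "{z. {z, y} \<in> E} \<subseteq> V" using sg_edge_sub[OF sg] by auto
  then show ?thesis using sg unfolding simple_graph_def by (meson finite_subset)
qed

lemma n2_bound:
  assumes sg: "simple_graph V E" and md: "max_degree_le V E 4"
    and Nv: "{z. {z, v} \<in> E} = {u, w, x}" and uw: "{u, w} \<in> E" and vw: "v \<noteq> w" and vu: "v \<noteq> u"
  shows "card {z. z \<noteq> v \<and> conf E v z} \<le> 10"
proof -
  let ?Nb = "\<lambda>y. {z. {z, y} \<in> E}"
  have uV: "u \<in> V" and wV: "w \<in> V" using sg_edge_sub[OF sg uw] by auto
  have xE: "{x, v} \<in> E" using Nv by auto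
  have xV: "x \<in> V" using sg_edge_sub[OF sg xE] by auto
  have uE: "{u, v} \<in> E" using Nv by auto
  have wE: "{w, v} \<in> E" using Nv by auto
  have sub: "{z. z \<noteq> v \<and> conf E v z} \<subseteq> {u, w, x} \<union> (?Nb u - {v, w}) \<union> (?Nb w - {v, u}) \<union> (?Nb x - {v})"
  proof
    fix z assume z: "z \<in> {z. z \<noteq> v \<and> conf E v z}"
    then have zv: "z \<noteq> v" and cf: "conf E v z" by auto
    show "z \<in> {u, w, x} \<union> (?Nb u - {v, w}) \<union> (?Nb w - {v, u}) \<union> (?Nb x - {v})"
    proof (cases "adj E v z")
      case True
      then have "{z, v} \<in> E" unfolding adj_def by (simp add: insert_commute)
      then show ?thesis using Nv by auto
    next
      case False
      then obtain t where t: "{v, t} \<in> E" "{t, z} \<in> E" using cf unfolding conf_def adj_def by blast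
      have "t \<in> {u, w, x}" using t(1) Nv by (auto simp: insert_commute)
      moreover have "{z, t} \<in> E" using t(2) by (simp add: insert_commute)
      ultimately show ?thesis using zv by auto
    qed
  qed
  have dg: "card (?Nb y) \<le> 4" if "y \<in> V" for y using md that unfolding max_degree_le_def degree_def by auto
  have c1: "card {u, w, x} \<le> 3" by (simp add: card_insert_le_m1)
  have c2: "card (?Nb u - {v, w}) \<le> 2"
  proof -
    have "{v, w} \<subseteq> ?Nb u" using uE uw by (auto simp: insert_commute)
    then have "card (?Nb u - {v, w}) = card (?Nb u) - card {v, w}" using nb_fin[OF sg] by (simp add: card_Diff_subset)
    then show ?thesis using dg[OF uV] vw by simp
  qed
  have c3: "card (?Nb w - {v, u}) \<le> 2"
  proof -
    have "{v, u} \<subseteq> ?Nb w" using wE uw by (auto simp: insert_commute)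
    then have "card (?Nb w - {v, u}) = card (?Nb w) - card {v, u}" using nb_fin[OF sg] by (simp add: card_Diff_subset)
    then show ?thesis using dg[OF wV] vu by simp
  qed
  have c4: "card (?Nb x - {v}) \<le> 3"
  proof -
    have "v \<in> ?Nb x" using xE by (auto simp: insert_commute)
    then have "card (?Nb x - {v}) = card (?Nb x) - 1" using nb_fin[OF sg] by simp
    then show ?thesis using dg[OF xV] by simp
  qed
  have fin: "finite ({u, w, x} \<union> (?Nb u - {v, w}) \<union> (?Nb w - {v, u}) \<union> (?Nb x - {v}))"
    using nb_fin[OF sg] by simp
  have "card ({u, w, x} \<union> (?Nb u - {v, w}) \<union> (?Nb w - {v, u}) \<union> (?Nb x - {v}))
      \<le> card {u, w, x} + card (?Nb u - {v, w}) + card (?Nb w - {v, u}) + card (?Nb x - {v})"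
    by (meson add_mono card_Un_le le_trans order_refl)
  then have "card ({u, w, x} \<union> (?Nb u - {v, w}) \<union> (?Nb w - {v, u}) \<union> (?Nb x - {v})) \<le> 10"
    using c1 c2 c3 c4 by simp
  then show ?thesis using card_mono[OF fin sub] by simp
qed



lemma reduce:
  fixes V :: "'a set" and E E' :: "'a set set"
  assumes min: "\<forall>(V' :: nat set) E'. simple_graph V' E' \<and> planar V' E' \<and> max_degree_le V' E' 4
           \<and> chi2 V' E' > 12 \<longrightarrow>
           \<not> (card V' < card V \<or> (card V' = card V \<and> card E' < card E))"
    and sg: "simple_graph V E" and chi: "chi2 V E > 12"
    and sg': "simple_graph V E'" and pl': "planar V E'" and md': "max_degree_le V E' 4"
    and lt: "card E' < card E"
    and ext: "\<forall>c'. dist2_coloring V E' 12 c' \<longrightarrow> (\<exists>c. dist2_coloring V E 12 c)"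
  shows False
proof -
  obtain V'' :: "nat set" and E'' :: "nat set set" where t: "simple_graph V'' E''" "planar V'' E''"
    "max_degree_le V'' E'' 4" "card V'' = card V" "card E'' = card E'"
    "\<forall>k c''. dist2_coloring V'' E'' k c'' \<longrightarrow> (\<exists>c. dist2_coloring V E' k c)"
    using transport[OF sg' pl' md'] by blast
  have "\<not> chi2 V'' E'' > 12" using min[rule_format, of V'' E''] t lt by auto
  then have le: "chi2 V'' E'' \<le> 12" by simp
  have finV'': "finite V''" using t(1) unfolding simple_graph_def by simp
  obtain c'' where "dist2_coloring V'' E'' (chi2 V'' E'') c''" using chi2_col[OF finV''] by blast
  then have "dist2_coloring V'' E'' 12 c''" using col_mono le by blast
  then obtain c' where "dist2_coloring V E' 12 c'" using t(6) by blast
  then obtain c where "dist2_coloring V E 12 c" using ext by blast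
  then have "chi2 V E \<le> 12" by (rule chi2_le)
  then show False using chi by simp
qed

lemma path1: "adj E a b \<Longrightarrow> (a, b) \<in> {(x, y). adj E x y}\<^sup>*"
  by (rule r_into_rtrancl) simp

lemma path2: "adj E a b \<Longrightarrow> adj E b c \<Longrightarrow> (a, c) \<in> {(x, y). adj E x y}\<^sup>*"
proof -
  assume a: "adj E a b" "adj E b c"
  have "(a, b) \<in> {(x, y). adj E x y}\<^sup>*" using path1[OF a(1)] .
  moreover have "(b, c) \<in> {(x, y). adj E x y}\<^sup>*" using path1[OF a(2)] .
  ultimately show ?thesis by (rule rtrancl_trans)
qed

lemma path3: "adj E a b \<Longrightarrow> adj E b c \<Longrightarrow> adj E c d \<Longrightarrow> (a, d) \<in> {(x, y). adj E x y}\<^sup>*"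
proof -
  assume a: "adj E a b" "adj E b c" "adj E c d"
  have "(a, c) \<in> {(x, y). adj E x y}\<^sup>*" using path2[OF a(1,2)] .
  moreover have "(c, d) \<in> {(x, y). adj E x y}\<^sup>*" using path1[OF a(3)] .
  ultimately show ?thesis by (rule rtrancl_trans)
qed

lemma deg_mono:
  assumes "simple_graph V E" "E' \<subseteq> E"
  shows "degree E' y \<le> degree E y"
  unfolding degree_def using assms(2) nb_fin[OF assms(1)] by (intro card_mono) auto

theorem lemma7:
  fixes V :: "'a set" and E :: "'a set set" and rho :: "'a \<times> 'a \<Rightarrow> 'a \<times> 'a"
  assumes "simple_graph V E"
    and "max_degree_le V E 4"
    and "planar_embedding V E rho"
    and "chi2 V E > 12"
    and "\<forall>(V' :: nat set) E'. simple_graph V' E' \<and> planar V' E' \<and> max_degree_le V' E' 4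
           \<and> chi2 V' E' > 12 \<longrightarrow>
           \<not> (card V' < card V \<or> (card V' = card V \<and> card E' < card E))"
  shows "\<not> (\<exists>v\<in>V. degree E v = 3 \<and>
             (\<exists>f\<in>faces E rho. face_degree f = 3 \<and> incident_face v f))"
proof
  assume "\<exists>v\<in>V. degree E v = 3 \<and> (\<exists>f\<in>faces E rho. face_degree f = 3 \<and> incident_face v f)"
  then obtain v f where vV: "v \<in> V" and dv: "degree E v = 3" and fF: "f \<in> faces E rho"
    and f3: "face_degree f = 3" and inc: "incident_face v f" by blast
  note sg = assms(1) and md = assms(2) and pe = assms(3) and chi = assms(4) and min = assms(5)
  have rs: "rotation_system E rho" using pe unfolding planar_embedding_def by simp
  let ?D = "darts E"
  let ?p = "face_perm rho"
  have pp: "pon ?p ?D" using fp_pon[OF sg rs] .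
  have pr: "pon rho ?D" using rs_pon[OF sg rs] .
  have rinj: "\<And>a b. a \<in> ?D \<Longrightarrow> b \<in> ?D \<Longrightarrow> rho a = rho b \<Longrightarrow> a = b"
    using pr unfolding pon_def by (meson inj_on_eq_iff)
  obtain d0 where d0: "d0 \<in> ?D" "f = orb ?p d0" using fF unfolding faces_def face_of_orb by blast
  obtain d1 where d1: "d1 \<in> f" "fst d1 = v" using inc unfolding incident_face_def by blast
  have d1D: "d1 \<in> ?D" using d1(1) d0 pon_orb_sub[OF pp d0(1)] by blast
  have "d1 \<in> orb ?p d0" using d1(1) d0(2) by simp
  then have "orb ?p d1 = orb ?p d0" by (rule orb_eq[OF pp d0(1)])
  then have fd1: "f = orb ?p d1" using d0(2) by simp
  have c3: "card (orb ?p d1) = 3" using f3 fd1 unfolding face_degree_def by simp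
  have cyc: "?p (?p (?p d1)) = d1" using orb_card3[OF pp d1D c3] by simp
  define w where "w = snd d1"
  have d1e: "d1 = (v, w)" using d1(2) unfolding w_def by (cases d1) simp
  have D2: "?p d1 \<in> ?D" using fp_in[OF rs d1D] .
  define u where "u = snd (?p d1)"
  have e2: "?p d1 = (w, u)" using fp_fst[OF rs d1D] unfolding u_def w_def by (cases "?p d1") simp
  have D3: "?p (?p d1) \<in> ?D" using fp_in[OF rs D2] .
  have f3': "fst (?p (?p d1)) = u" using fp_fst[OF rs D2] e2 by simp
  have "fst (?p (?p (?p d1))) = snd (?p (?p d1))" using fp_fst[OF rs D3] .
  then have s3: "snd (?p (?p d1)) = v" using cyc d1(2) by simp
  have e3: "?p (?p d1) = (u, v)" using f3' s3 by (cases "?p (?p d1)") simp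
  have pvw: "?p (v, w) = (w, u)" using e2 d1e by simp
  have pwu: "?p (w, u) = (u, v)" using e3 e2 by simp
  have puv: "?p (u, v) = (v, w)" using cyc e3 d1e by simp
  have Dvw: "(v, w) \<in> ?D" using d1D d1e by simp
  have Dwu: "(w, u) \<in> ?D" using D2 e2 by simp
  have Duv: "(u, v) \<in> ?D" using D3 e3 by simp
  have vw: "v \<noteq> w" using dart_neq[OF Dvw] by simp
  have wu: "w \<noteq> u" using dart_neq[OF Dwu] by simp
  have uv: "u \<noteq> v" using dart_neq[OF Duv] by simp
  have rwv: "rho (w, v) = (w, u)" using pvw unfolding face_perm_def by simp
  have ruw: "rho (u, w) = (u, v)" using pwu unfolding face_perm_def by simp
  have rvu: "rho (v, u) = (v, w)" using puv unfolding face_perm_def by simp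
  have Evw: "{v, w} \<in> E" using Dvw unfolding darts_def by simp
  have Ewu: "{w, u} \<in> E" using Dwu unfolding darts_def by simp
  have Euv: "{u, v} \<in> E" using Duv unfolding darts_def by simp
  have Euw: "{u, w} \<in> E" using Ewu by (simp add: insert_commute)
  have Dvu: "(v, u) \<in> ?D" using dart_rev[OF Duv] by simp
  have Dwv: "(w, v) \<in> ?D" using dart_rev[OF Dvw] by simp
  have Duw: "(u, w) \<in> ?D" using dart_rev[OF Dwu] by simp
  let ?N = "{z. {z, v} \<in> E}"
  have cN: "card ?N = 3" using dv unfolding degree_def .
  have uN: "u \<in> ?N" using Euv by simp
  have wN: "w \<in> ?N" using Evw by (simp add: insert_commute)
  have finN: "finite ?N" using nb_fin[OF sg] .
  have "card (?N - {u, w}) = 1" using cN uN wN wu finN by (simp add: card_Diff_subset)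
  then obtain x where x1: "?N - {u, w} = {x}" by (rule card_1_singletonE)
  have Nv: "?N = {u, w, x}" using x1 uN wN by blast
  have xu: "x \<noteq> u" and xw: "x \<noteq> w" using x1 by auto
  have Exv: "{x, v} \<in> E" using x1 by blast
  have "card {x, v} = 2" using sg Exv unfolding simple_graph_def by blast
  then have xv: "x \<noteq> v" by (cases "x = v") simp_all
  have Evx: "{v, x} \<in> E" using Exv by (simp add: insert_commute)
  have Dvx: "(v, x) \<in> ?D" using Evx xv by (simp add: darts_iff)
  have Dxv: "(x, v) \<in> ?D" using Exv xv by (simp add: darts_iff)
  have inN: "z \<in> {u, w, x}" if "(v, z) \<in> ?D" for z
  proof -
    have "{v, z} \<in> E" using that by (simp add: darts_iff)
    then have "{z, v} \<in> E" by (simp add: insert_commute)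
    then have "z \<in> ?N" by simp
    then show ?thesis using Nv by simp
  qed
  have rvw: "rho (v, w) = (v, x)"
  proof -
    have r: "rho (v, w) \<in> ?D" "fst (rho (v, w)) = v" using rs_in[OF rs Dvw] rs_fst[OF rs Dvw] by auto
    define z where "z = snd (rho (v, w))"
    have rz: "rho (v, w) = (v, z)" using r(2) unfolding z_def by (cases "rho (v, w)") simp
    have "z \<in> {u, w, x}" using inN r(1) rz by simp
    moreover have "z \<noteq> w"
    proof
      assume "z = w"
      then have "rho (v, w) = rho (v, u)" using rz rvu by simp
      then show False using rinj[OF Dvw Dvu] wu by simp
    qed
    moreover have "z \<noteq> u"
    proof
      assume "z = u"
      then have rr: "rho (v, w) = (v, u)" using rz by simp
      let ?A = "{(v, u), (v, w)}"
      have "rho ` ?A \<subseteq> ?A" using rr rvu by auto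
      then have "orb rho (v, u) \<subseteq> ?A" by (rule orb_closed) simp
      moreover have "(v, x) \<in> orb rho (v, u)" using rs_trans[OF rs Dvu Dvx] by simp
      ultimately show False using xu xw by auto
    qed
    ultimately show ?thesis using rz by auto
  qed
  have rvx: "rho (v, x) = (v, u)"
  proof -
    have r: "rho (v, x) \<in> ?D" "fst (rho (v, x)) = v" using rs_in[OF rs Dvx] rs_fst[OF rs Dvx] by auto
    define z where "z = snd (rho (v, x))"
    have rz: "rho (v, x) = (v, z)" using r(2) unfolding z_def by (cases "rho (v, x)") simp
    have "z \<in> {u, w, x}" using inN r(1) rz by simp
    moreover have "z \<noteq> w"
    proof
      assume "z = w"
      then have "rho (v, x) = rho (v, u)" using rz rvu by simp
      then show False using rinj[OF Dvx Dvu] xu by simp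
    qed
    moreover have "z \<noteq> x"
    proof
      assume "z = x"
      then have "rho (v, x) = rho (v, w)" using rz rvw by simp
      then show False using rinj[OF Dvx Dvw] xw by simp
    qed
    ultimately show ?thesis using rz by auto
  qed
  have n2: "card {z. z \<noteq> v \<and> conf E v z} < 12"
    using n2_bound[OF sg md Nv Euw vw uv[symmetric]] by simp
  have finE: "finite E" using sg_finE[OF sg] .
  show False
  proof (cases "{u, x} \<in> E")
    case True
    let ?E' = "E - {{u, v}}"
    have na: "rho (u, v) \<noteq> (u, v)"
    proof
      assume "rho (u, v) = (u, v)"
      then have "rho (u, w) = rho (u, v)" using ruw by simp
      then show False using rinj[OF Duw Duv] vw by simp
    qed
    have nb: "rho (v, u) \<noteq> (v, u)" using rvu wu by simp
    have tri: "face_of rho (u, v) = {(u, v), (v, w), (w, u)}"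
      unfolding face_of_orb using orb3[of ?p "(u, v)"] puv pvw pwu by simp
    have nf: "(v, u) \<notin> face_of rho (u, v)" unfolding tri using uv wu vw by auto
    have a1: "adj ?E' u w" unfolding adj_def using Euw vw by (auto simp: doubleton_eq_iff)
    have Ewv: "{w, v} \<in> E" using Evw by (simp add: insert_commute)
    have "{w, v} \<noteq> {u, v}" using wu vw by (simp add: doubleton_eq_iff)
    then have a2: "adj ?E' w v" unfolding adj_def using Ewv by simp
    have path: "(u, v) \<in> {(x, y). adj ?E' x y}\<^sup>*"
      using path2[OF a1 a2] .
    have pe': "planar_embedding V ?E' (delr rho u v)"
      using del_planar[OF sg rs Euv uv na nb nf path] pe by simp
    have pl': "planar V ?E'" using pe' unfolding planar_def by blast
    have sg': "simple_graph V ?E'" using sg_del[OF sg] .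
    have md': "max_degree_le V ?E' 4"
      using md deg_mono[OF sg, of ?E'] unfolding max_degree_le_def by (meson Diff_subset le_trans)
    have lt: "card ?E' < card E" using card_Diff1_less[OF finE Euv] .
    have cuw: "conf ?E' u w" using a1 unfolding conf_def by simp
    have cux: "conf ?E' u x" unfolding conf_def adj_def using True xv by (auto simp: doubleton_eq_iff)
    have a3: "adj ?E' v x" unfolding adj_def using Evx xu by (auto simp: doubleton_eq_iff)
    have cwx: "conf ?E' w x" using a2 a3 unfolding conf_def by blast
    have call: "conf ?E' y z" if "y \<in> {u, w, x}" "z \<in> {u, w, x}" "y \<noteq> z" for y z
      using that cuw cux cwx conf_sym[OF cuw] conf_sym[OF cux] conf_sym[OF cwx] by auto
    have pres: "\<forall>y\<in>V. \<forall>z\<in>V. y \<noteq> v \<longrightarrow> z \<noteq> v \<longrightarrow> y \<noteq> z \<longrightarrow> conf E y z \<longrightarrow> conf ?E' y z"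
    proof (intro ballI impI)
      fix y z assume yz: "y \<in> V" "z \<in> V" "y \<noteq> v" "z \<noteq> v" "y \<noteq> z" "conf E y z"
      show "conf ?E' y z"
      proof (cases "adj E y z")
        case True
        then have "adj ?E' y z" using yz(3,4) unfolding adj_def by (auto simp: doubleton_eq_iff)
        then show ?thesis unfolding conf_def by simp
      next
        case False
        then obtain t where t: "adj E y t" "adj E t z" using yz(6) unfolding conf_def by blast
        show ?thesis
        proof (cases "t = v")
          case True
          have "{y, v} \<in> E" "{v, z} \<in> E" using t True unfolding adj_def by auto
          then have "y \<in> ?N" "z \<in> ?N" by (auto simp: insert_commute)
          then show ?thesis using call yz(5) Nv by simp
        next
          case False
          have "adj ?E' y t" "adj ?E' t z" using t False yz(3,4) unfolding adj_def by (auto simp: doubleton_eq_iff)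
          then show ?thesis unfolding conf_def by blast
        qed
      qed
    qed
    have ext: "\<forall>c'. dist2_coloring V ?E' 12 c' \<longrightarrow> (\<exists>c. dist2_coloring V E 12 c)"
      using extend[OF sg _ vV pres n2] by blast
    show False using reduce[OF min sg chi sg' pl' md' lt ext] .
  next
    case False
    note nux = False
    let ?E1 = "insert {u, x} E"
    define g where "g = ins_after rho (u, v) (u, x)"
    define r1 where "r1 = ins_before g (x, v) (x, u)"
    have ux: "u \<noteq> x" using xu by simp
    have Eux1: "{u, x} \<in> ?E1" by simp
    have uV: "u \<in> V" using sg_edge_sub[OF sg Euv] by simp
    have xV: "x \<in> V" using sg_edge_sub[OF sg Exv] by simp
    have sg1: "simple_graph V ?E1" using sg uV xV ux unfolding simple_graph_def by auto
    have nDux: "(u, x) \<notin> ?D" using nux by (simp add: darts_iff)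
    have "{x, u} \<notin> E" using nux by (simp add: insert_commute)
    then have nDxu: "(x, u) \<notin> ?D" by (simp add: darts_iff)
    have D1: "darts ?E1 = insert (x, u) (insert (u, x) ?D)"
      using ux unfolding darts_def by (auto simp: doubleton_eq_iff)
    have pg: "pon g (insert (u, x) ?D)" unfolding g_def using ins_after_pon[OF pr Duv nDux] .
    have xvI: "(x, v) \<in> insert (u, x) ?D" using Dxv by simp
    have nxuI: "(x, u) \<notin> insert (u, x) ?D" using nDxu ux by auto
    have pr1: "pon r1 (darts ?E1)" unfolding r1_def D1 using ins_before_pon[OF pg xvI nxuI] .
    have ruvD: "rho (u, v) \<in> ?D" using rs_in[OF rs Duv] .
    have fruv: "fst (rho (u, v)) = u" using rs_fst[OF rs Duv] by simp
    have ruv_xv: "rho (u, v) \<noteq> (x, v)" using fruv ux by auto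
    have g_uv: "g (u, v) = (u, x)" unfolding g_def ins_after_def by simp
    have g_ux: "g (u, x) = rho (u, v)" unfolding g_def ins_after_def using xv by simp
    have g_oth: "g d = rho d" if "d \<noteq> (u, v)" "d \<noteq> (u, x)" for d
      using that unfolding g_def ins_after_def by simp
    have r1_xu: "r1 (x, u) = (x, v)" unfolding r1_def ins_before_def by simp
    have r1_a: "r1 d = (x, u)" if "d \<noteq> (x, u)" "g d = (x, v)" for d
      using that unfolding r1_def ins_before_def by simp
    have r1_b: "r1 d = g d" if "d \<noteq> (x, u)" "g d \<noteq> (x, v)" for d
      using that unfolding r1_def ins_before_def by simp
    have r1_ux: "r1 (u, x) = rho (u, v)" using r1_b[of "(u, x)"] g_ux ruv_xv ux by simp
    have r1_uv: "r1 (u, v) = (u, x)" using r1_b[of "(u, v)"] g_uv ux xv by simp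
    have r1_vx: "r1 (v, x) = (v, u)" using r1_b[of "(v, x)"] g_oth[of "(v, x)"] rvx uv xv by auto
    have r1_vu: "r1 (v, u) = (v, w)" using r1_b[of "(v, u)"] g_oth[of "(v, u)"] rvu uv xv by auto
    have r1_wv: "r1 (w, v) = (w, u)" using r1_b[of "(w, v)"] g_oth[of "(w, v)"] rwv wu xw by auto
    have r1_uw: "r1 (u, w) = (u, v)" using r1_b[of "(u, w)"] g_oth[of "(u, w)"] ruw ux vw xw by auto
    have rxvD: "rho (x, v) \<in> ?D" "fst (rho (x, v)) = x" using rs_in[OF rs Dxv] rs_fst[OF rs Dxv] by auto
    have g_xv: "g (x, v) = rho (x, v)" using g_oth[of "(x, v)"] ux xv by auto
    have r1_xv: "r1 (x, v) \<noteq> (x, v) \<and> fst (r1 (x, v)) = x"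
    proof (cases "g (x, v) = (x, v)")
      case True then show ?thesis using r1_a[of "(x, v)"] xu[symmetric] uv by auto
    next
      case False then show ?thesis using r1_b[of "(x, v)"] g_xv rxvD uv by auto
    qed
    have gfst: "fst (g d) = fst d" if "d \<in> insert (u, x) ?D" for d
    proof (cases "d = (u, v) \<or> d = (u, x)")
      case True then show ?thesis using g_uv g_ux fruv by auto
    next
      case False then show ?thesis using g_oth[of d] that rs_fst[OF rs] by auto
    qed
    have tails: "\<forall>d\<in>darts ?E1. fst (r1 d) = fst d"
    proof
      fix d assume d: "d \<in> darts ?E1"
      show "fst (r1 d) = fst d"
      proof (cases "d = (x, u)")
        case True then show ?thesis using r1_xu by simp
      next
        case dxu: False
        have dI: "d \<in> insert (u, x) ?D" using d dxu D1 by simp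
        show ?thesis
        proof (cases "g d = (x, v)")
          case True then show ?thesis using r1_a[OF dxu True] gfst[OF dI] by simp
        next
          case False then show ?thesis using r1_b[OF dxu False] gfst[OF dI] by simp
        qed
      qed
    qed
    have E1d: "?E1 - {{u, x}} = E" using nux by auto
    have agree: "\<forall>d\<in>?D. delr r1 u x d = rho d"
    proof
      fix d assume d: "d \<in> ?D"
      have dxu: "d \<noteq> (x, u)" and dux: "d \<noteq> (u, x)" using d nDxu nDux by auto
      have rdD: "rho d \<in> ?D" using rs_in[OF rs d] .
      have R1xu: "rem r1 (u, x) (x, u) = (x, v)" unfolding rem_def using r1_xu ux by simp
      show "delr r1 u x d = rho d"
      proof (cases "d = (u, v)")
        case True
        have "rem r1 (u, x) d = rho (u, v)" unfolding rem_def using True r1_uv r1_ux by simp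
        moreover have "rho (u, v) \<noteq> (x, u)" using ruvD nDxu by auto
        ultimately show ?thesis unfolding delr_def rem_def[of "rem r1 (u, x)"] using True by simp
      next
        case duv: False
        have gd: "g d = rho d" using g_oth[OF duv dux] .
        show ?thesis
        proof (cases "rho d = (x, v)")
          case True
          have "r1 d = (x, u)" using r1_a[OF dxu] gd True by simp
          then have "rem r1 (u, x) d = (x, u)" unfolding rem_def using ux by simp
          then show ?thesis unfolding delr_def rem_def[of "rem r1 (u, x)"] using R1xu True by simp
        next
          case False
          have "r1 d = rho d" using r1_b[OF dxu] gd False by simp
          moreover have "rho d \<noteq> (u, x)" "rho d \<noteq> (x, u)" using rdD nDux nDxu by auto
          ultimately have "rem r1 (u, x) d = rho d" unfolding rem_def by simp
          then show ?thesis unfolding delr_def rem_def[of "rem r1 (u, x)"] using \<open>rho d \<noteq> (x, u)\<close> by simp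
        qed
      qed
    qed
    have rsE: "rotation_system (?E1 - {{u, x}}) rho" using rs E1d by simp
    have na1: "r1 (u, x) \<noteq> (u, x)" using r1_ux ruvD nDux by auto
    have nb1: "r1 (x, u) \<noteq> (x, u)" using r1_xu uv by simp
    have agree': "\<forall>d\<in>darts (?E1 - {{u, x}}). delr r1 u x d = rho d" using agree E1d by simp
    have rs1: "rotation_system ?E1 r1" using rot_insert[OF sg1 rsE Eux1 ux pr1 tails na1 nb1 agree'] .
    have p1_ux: "face_perm r1 (u, x) = (x, v)" unfolding face_perm_def using r1_xu by simp
    have p1_xv: "face_perm r1 (x, v) = (v, u)" unfolding face_perm_def using r1_vx by simp
    have p1_vu: "face_perm r1 (v, u) = (u, x)" unfolding face_perm_def using r1_uv by simp
    have tri1: "face_of r1 (u, x) = {(u, x), (x, v), (v, u)}"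
      unfolding face_of_orb using orb3[of "face_perm r1" "(u, x)"] p1_ux p1_xv p1_vu by simp
    have nf1: "(x, u) \<notin> face_of r1 (u, x)" unfolding tri1 using ux uv xv by auto
    have Evu: "{v, u} \<in> E" using Euv by (simp add: insert_commute)
    have pth1: "(u, x) \<in> {(a, b). adj (?E1 - {{u, x}}) a b}\<^sup>*"
      unfolding E1d using path2[of E u v x] Euv Evx unfolding adj_def by simp
    have pe1: "planar_embedding V ?E1 r1"
      using del_planar[OF sg1 rs1 Eux1 ux na1 nb1 nf1 pth1] E1d planar_cong[OF rs agree] pe by simp
    let ?E2 = "?E1 - {{v, u}}"
    define r2 where "r2 = delr r1 v u"
    have Evu1: "{v, u} \<in> ?E1" using Evu by simp
    have vu: "v \<noteq> u" using uv by simp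
    have na2: "r1 (v, u) \<noteq> (v, u)" using r1_vu wu by simp
    have nb2: "r1 (u, v) \<noteq> (u, v)" using r1_uv xv by simp
    have tri2: "face_of r1 (v, u) = {(v, u), (u, x), (x, v)}"
      unfolding face_of_orb using orb3[of "face_perm r1" "(v, u)"] p1_ux p1_xv p1_vu by simp
    have nf2: "(u, v) \<notin> face_of r1 (v, u)" unfolding tri2 using ux uv xv by auto
    have "{v, x} \<noteq> {v, u}" using xu by (simp add: doubleton_eq_iff)
    then have a21: "adj ?E2 v x" unfolding adj_def using Evx by simp
    have "{x, u} \<noteq> {v, u}" using xv xu by (simp add: doubleton_eq_iff)
    moreover have "{x, u} \<in> ?E1" by (simp add: insert_commute)
    ultimately have a22: "adj ?E2 x u" unfolding adj_def by simp
    have pth2: "(v, u) \<in> {(a, b). adj ?E2 a b}\<^sup>*" using path2[OF a21 a22] .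
    have pe2: "planar_embedding V ?E2 r2"
      unfolding r2_def using del_planar[OF sg1 rs1 Evu1 vu na2 nb2 nf2 pth2] pe1 by simp
    have rs2: "rotation_system ?E2 r2" unfolding r2_def using del_rs(1)[OF sg1 rs1 Evu1 vu na2 nb2] .
    have sg2: "simple_graph V ?E2" using sg_del[OF sg1] .
    let ?E3 = "?E2 - {{x, v}}"
    have "{x, v} \<noteq> {v, u}" using xu uv by (auto simp: doubleton_eq_iff)
    then have Exv2: "{x, v} \<in> ?E2" using Exv by simp
    have R: "r2 d = (let y = (if r1 d = (v, u) then r1 (v, u) else r1 d) in
                if y = (u, v) then (if r1 (u, v) = (v, u) then r1 (v, u) else r1 (u, v)) else y)" for d
      unfolding r2_def delr_def rem_def Let_def by simp
    have r2_vx: "r2 (v, x) = (v, w)" using R[of "(v, x)"] r1_vx r1_vu uv by simp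
    have r2_wv: "r2 (w, v) = (w, u)" using R[of "(w, v)"] r1_wv wu vw uv by auto
    have r2_uw: "r2 (u, w) = (u, x)" using R[of "(u, w)"] r1_uw r1_uv uv xv by auto
    have r2_xu: "r2 (x, u) = (x, v)" using R[of "(x, u)"] r1_xu xv xu by auto
    have r2_xv: "r2 (x, v) = r1 (x, v)"
    proof -
      have "r1 (x, v) \<noteq> (v, u)" "r1 (x, v) \<noteq> (u, v)" using r1_xv xv xu by auto
      then show ?thesis using R[of "(x, v)"] by simp
    qed
    have na3: "r2 (x, v) \<noteq> (x, v)" using r2_xv r1_xv by simp
    have nb3: "r2 (v, x) \<noteq> (v, x)" using r2_vx xw by simp
    have p2_xv: "face_perm r2 (x, v) = (v, w)" unfolding face_perm_def using r2_vx by simp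
    have p2_vw: "face_perm r2 (v, w) = (w, u)" unfolding face_perm_def using r2_wv by simp
    have p2_wu: "face_perm r2 (w, u) = (u, x)" unfolding face_perm_def using r2_uw by simp
    have p2_ux: "face_perm r2 (u, x) = (x, v)" unfolding face_perm_def using r2_xu by simp
    have quad: "face_of r2 (x, v) = {(x, v), (v, w), (w, u), (u, x)}"
      unfolding face_of_orb using orb4[of "face_perm r2" "(x, v)"] p2_xv p2_vw p2_wu p2_ux by simp
    have nf3: "(v, x) \<notin> face_of r2 (x, v)" unfolding quad using xv xw vw uv by auto
    have mem3: "e \<in> ?E3 \<longleftrightarrow> (e = {u, x} \<or> e \<in> E) \<and> e \<noteq> {v, u} \<and> e \<noteq> {x, v}" for e by auto
    have in3: "{y, z} \<in> ?E3" if "{y, z} \<in> E" "y \<noteq> v" "z \<noteq> v" for y z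
      using that mem3 by (auto simp: doubleton_eq_iff)
    have Exu3: "{x, u} \<in> ?E3" using mem3 xv xu uv by (auto simp: doubleton_eq_iff)
    have Eux3: "{u, x} \<in> ?E3" using Exu3 by (simp add: insert_commute)
    have Euw3: "{u, w} \<in> ?E3" using in3[OF Euw uv] vw by simp
    have Ewu3: "{w, u} \<in> ?E3" using Euw3 by (simp add: insert_commute)
    have "{w, v} \<noteq> {x, v}" using xw xv by (auto simp: doubleton_eq_iff)
    moreover have "{w, v} \<noteq> {v, u}" using vw wu by (auto simp: doubleton_eq_iff)
    moreover have "{w, v} \<in> E" using Evw by (simp add: insert_commute)
    ultimately have Ewv3: "{w, v} \<in> ?E3" by simp
    have pth3: "(x, v) \<in> {(a, b). adj ?E3 a b}\<^sup>*"
      using path3[of ?E3 x u w v] Exu3 Euw3 Ewv3 unfolding adj_def by simp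
    have pe3: "planar_embedding V ?E3 (delr r2 x v)"
      using del_planar[OF sg2 rs2 Exv2 xv na3 nb3 nf3 pth3] pe2 by simp
    have pl3: "planar V ?E3" using pe3 unfolding planar_def by blast
    have sg3: "simple_graph V ?E3" using sg_del[OF sg2] .
    have finE1: "finite ?E1" using finE by simp
    have c1: "card ?E1 = Suc (card E)" using finE nux by simp
    have c2: "card ?E2 < card ?E1" using card_Diff1_less[OF finE1 Evu1] .
    have c3': "card ?E3 < card ?E2" using card_Diff1_less[OF _ Exv2] finE1 by simp
    have lt3: "card ?E3 < card E" using c1 c2 c3' by simp
    have md3: "max_degree_le V ?E3 4"
      unfolding max_degree_le_def degree_def
    proof
      fix y assume yV: "y \<in> V"
      have dy: "card {z. {z, y} \<in> E} \<le> 4" using md yV unfolding max_degree_le_def degree_def by simp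
      show "card {z. {z, y} \<in> ?E3} \<le> 4"
      proof (cases "y = u \<or> y = x")
        case False
        have "{z. {z, y} \<in> ?E3} \<subseteq> {z. {z, y} \<in> E}"
        proof
          fix z assume "z \<in> {z. {z, y} \<in> ?E3}"
          then have "{z, y} \<in> ?E3" by simp
          moreover have "{z, y} \<noteq> {u, x}" using False by (auto simp: doubleton_eq_iff)
          ultimately show "z \<in> {z. {z, y} \<in> E}" using mem3 by simp
        qed
        then have "card {z. {z, y} \<in> ?E3} \<le> card {z. {z, y} \<in> E}" by (rule card_mono[OF nb_fin[OF sg]])
        then show ?thesis using dy by simp
      next
        case True
        then obtain q0 where q0: "(y = u \<and> q0 = x) \<or> (y = x \<and> q0 = u)" by blast
        have sub: "{z. {z, y} \<in> ?E3} \<subseteq> insert q0 ({z. {z, y} \<in> E} - {v})"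
        proof
          fix z assume "z \<in> {z. {z, y} \<in> ?E3}"
          then have z3: "{z, y} \<in> ?E3" by simp
          show "z \<in> insert q0 ({z. {z, y} \<in> E} - {v})"
          proof (cases "{z, y} = {u, x}")
            case True then show ?thesis using q0 ux by (auto simp: doubleton_eq_iff)
          next
            case False
            then have zE: "{z, y} \<in> E" and n1: "{z, y} \<noteq> {v, u}" and n2: "{z, y} \<noteq> {x, v}"
              using z3 mem3 by auto
            have "z \<noteq> v" using n1 n2 q0 by (auto simp: doubleton_eq_iff)
            then show ?thesis using zE by simp
          qed
        qed
        have vin: "v \<in> {z. {z, y} \<in> E}" using True Evu Evx by auto
        have fin': "finite {z. {z, y} \<in> E}" using nb_fin[OF sg] .
        have "card (insert q0 ({z. {z, y} \<in> E} - {v})) \<le> Suc (card ({z. {z, y} \<in> E} - {v}))"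
          by (simp add: card_insert_le_m1 card_insert_if fin')
        also have "\<dots> = card {z. {z, y} \<in> E}" by (rule card_Suc_Diff1[OF fin' vin])
        finally have "card (insert q0 ({z. {z, y} \<in> E} - {v})) \<le> 4" using dy by simp
        moreover have "finite (insert q0 ({z. {z, y} \<in> E} - {v}))" using fin' by simp
        ultimately show ?thesis using card_mono[OF _ sub] by (meson le_trans)
      qed
    qed
    have a3uw: "adj ?E3 u w" unfolding adj_def using Euw3 .
    have a3ux: "adj ?E3 u x" unfolding adj_def using Eux3 .
    have a3wu: "adj ?E3 w u" unfolding adj_def using Ewu3 .
    have cuw: "conf ?E3 u w" using a3uw unfolding conf_def by simp
    have cux: "conf ?E3 u x" using a3ux unfolding conf_def by simp
    have cwx: "conf ?E3 w x" using a3wu a3ux unfolding conf_def by blast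
    have call: "conf ?E3 y z" if "y \<in> {u, w, x}" "z \<in> {u, w, x}" "y \<noteq> z" for y z
      using that cuw cux cwx conf_sym[OF cuw] conf_sym[OF cux] conf_sym[OF cwx] by auto
    have pres: "\<forall>y\<in>V. \<forall>z\<in>V. y \<noteq> v \<longrightarrow> z \<noteq> v \<longrightarrow> y \<noteq> z \<longrightarrow> conf E y z \<longrightarrow> conf ?E3 y z"
    proof (intro ballI impI)
      fix y z assume yz: "y \<in> V" "z \<in> V" "y \<noteq> v" "z \<noteq> v" "y \<noteq> z" "conf E y z"
      show "conf ?E3 y z"
      proof (cases "adj E y z")
        case True
        then have "adj ?E3 y z" using in3[OF _ yz(3,4)] unfolding adj_def by simp
        then show ?thesis unfolding conf_def by simp
      next
        case False
        then obtain t where t: "adj E y t" "adj E t z" using yz(6) unfolding conf_def by blast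
        show ?thesis
        proof (cases "t = v")
          case True
          have "{y, v} \<in> E" "{v, z} \<in> E" using t True unfolding adj_def by auto
          then have "y \<in> ?N" "z \<in> ?N" by (auto simp: insert_commute)
          then show ?thesis using call yz(5) Nv by simp
        next
          case False
          have "adj ?E3 y t" "adj ?E3 t z" using t in3 False yz(3,4) unfolding adj_def by auto
          then show ?thesis unfolding conf_def by blast
        qed
      qed
    qed
    have ext: "\<forall>c'. dist2_coloring V ?E3 12 c' \<longrightarrow> (\<exists>c. dist2_coloring V E 12 c)"
      using extend[OF sg _ vV pres n2] by blast
    show False using reduce[OF min sg chi sg3 pl3 md3 lt3 ext] .
  qed
qed


end
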